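(* Let $H$ be a real Hilbert space with inner product $\langle\cdot,\cdot\rangle$ and norm $|\cdot|$, and let $A_1:D(A_1)\subset H\to H$, $A_2:D(A_2)\subset H\to H$ be densely defined closed linear operators with $A_i=A_i^*$ and $\langle A_iu,u\rangle\ge \omega_i|u|^2$ for all $u\in D(A_i)$ ($i=1,2$), for some $\omega_1,\omega_2>0$. Then the following are equivalent: (a) $D(A_2)\subset D(A_1^{1/2})$ and there is $c>0$ with $|A_1^{1/2}u|\le c|A_2u|$ for all $u\in D(A_2)$; (b) $A_1^{1/2}A_2^{-1}$ is a bounded linear operator on $H$; (c) there is $c>0$ such that $|\langle A_1u,v\rangle|\le c\,|A_2v|\,\langle A_1u,u\rangle^{1/2}$ for all $u\in D(A_1)$ and all $v\in D(A_2)$.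
   Context: $A_1^{1/2}$ denotes the (self-adjoint, positive) square root of $A_1$, with domain $D(A_1^{1/2})$. *)

theory Defs
  imports "HOL-Analysis.Analysis"
begin

text \<open>A (possibly unbounded) linear operator on a real Hilbert space 'a is given by
a domain D :: 'a set and a map A :: 'a => 'a (only its values on D matter).\<close>

definition lin_op :: "'a::real_inner set \<Rightarrow> ('a \<Rightarrow> 'a) \<Rightarrow> bool" where
  "lin_op D A \<longleftrightarrow> subspace D \<and>
     (\<forall>x\<in>D. \<forall>y\<in>D. A (x + y) = A x + A y) \<and>
     (\<forall>c. \<forall>x\<in>D. A (c *\<^sub>R x) = c *\<^sub>R A x)"

definition densely_defined :: "'a::real_inner set \<Rightarrow> bool" where
  "densely_defined D \<longleftrightarrow> closure D = UNIV"

definition closed_op :: "'a::real_inner set \<Rightarrow> ('a \<Rightarrow> 'a) \<Rightarrow> bool" where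
  "closed_op D A \<longleftrightarrow> closed {(x, A x) | x. x \<in> D}"

definition adj_dom :: "'a::real_inner set \<Rightarrow> ('a \<Rightarrow> 'a) \<Rightarrow> 'a set" where
  "adj_dom D A = {v. \<exists>w. \<forall>u\<in>D. inner (A u) v = inner u w}"

text \<open>A = A*: same domain and A* v = A v (the representing vector is unique by density).\<close>
definition self_adjoint :: "'a::real_inner set \<Rightarrow> ('a \<Rightarrow> 'a) \<Rightarrow> bool" where
  "self_adjoint D A \<longleftrightarrow> adj_dom D A = D \<and>
     (\<forall>u\<in>D. \<forall>v\<in>D. inner (A u) v = inner u (A v))"

text \<open>The positive self-adjoint square root (S restricted to be 0 outside its domain,
so that it is uniquely determined as a pair).\<close>
definition is_sqrt_op :: "'a::real_inner set \<Rightarrow> ('a \<Rightarrow> 'a) \<Rightarrow> 'a set \<Rightarrow> ('a \<Rightarrow> 'a) \<Rightarrow> bool" where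
  "is_sqrt_op D A DS S \<longleftrightarrow> lin_op DS S \<and> densely_defined DS \<and> closed_op DS S \<and>
     self_adjoint DS S \<and> (\<forall>u\<in>DS. inner (S u) u \<ge> 0) \<and> (\<forall>u. u \<notin> DS \<longrightarrow> S u = 0) \<and>
     {u \<in> DS. S u \<in> DS} = D \<and> (\<forall>u\<in>D. S (S u) = A u)"

definition sqrt_pair :: "'a::real_inner set \<Rightarrow> ('a \<Rightarrow> 'a) \<Rightarrow> 'a set \<times> ('a \<Rightarrow> 'a)" where
  "sqrt_pair D A = (THE p. is_sqrt_op D A (fst p) (snd p))"

definition sqrt_dom :: "'a::real_inner set \<Rightarrow> ('a \<Rightarrow> 'a) \<Rightarrow> 'a set" where
  "sqrt_dom D A = fst (sqrt_pair D A)"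

definition sqrt_op :: "'a::real_inner set \<Rightarrow> ('a \<Rightarrow> 'a) \<Rightarrow> 'a \<Rightarrow> 'a" where
  "sqrt_op D A = snd (sqrt_pair D A)"

end

theory Submission
  imports Defs "HOL-Computational_Algebra.Formal_Power_Series"
begin

lemma infdist_approx:
  assumes "A \<noteq> {}" "e > 0"
  shows "\<exists>a\<in>A. dist x a < infdist x A + e"
proof -
  have "infdist x A = (INF a\<in>A. dist x a)" using assms by (simp add: infdist_notempty)
  moreover have "(INF a\<in>A. dist x a) < infdist x A + e" using assms calculation by simp
  ultimately show ?thesis
    by (metis (no_types, lifting) assms(1) cInf_lessD image_is_empty imageE)
qed


lemma parallelogram_mid:
  fixes a b :: "'a::real_inner"
  shows "(norm (a - b))\<^sup>2 = 2*(norm a)\<^sup>2 + 2*(norm b)\<^sup>2 - 4*(norm ((a+b) /\<^sub>R 2))\<^sup>2"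
proof -
  have "(norm ((a+b) /\<^sub>R 2))\<^sup>2 = (norm (a+b))\<^sup>2 / 4"
    by (simp add: power_divide)
  then show ?thesis
    by (simp add: power2_norm_eq_inner inner_diff_left inner_diff_right inner_add_left inner_add_right inner_commute)
qed

lemma inner_expand_sq:
  fixes a m :: "'a::real_inner"
  shows "inner (a - t *\<^sub>R m) (a - t *\<^sub>R m) = inner a a - 2*t*inner a m + t\<^sup>2 * inner m m"
  by (simp add: inner_diff_left inner_diff_right inner_commute[of m a] power2_eq_square) (simp add: right_diff_distrib)

lemma aux_ineq: "(X::real) \<le> 2*a + 2*b \<Longrightarrow> a < E/4 \<Longrightarrow> b < E/4 \<Longrightarrow> X < E" by linarith

lemma projection_exists:
  fixes M :: "'a::{real_inner,complete_space} set"
  assumes sub: "subspace M" and cl: "closed M"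
  shows "\<exists>p\<in>M. \<forall>m\<in>M. inner (x - p) m = 0"
proof -
  have ne: "M \<noteq> {}" using sub subspace_0 by blast
  define d where "d = infdist x M"
  have d0: "d \<ge> 0" unfolding d_def by (rule infdist_nonneg)
  have dle: "\<And>m. m \<in> M \<Longrightarrow> d \<le> norm (x - m)"
    unfolding d_def by (metis dist_norm infdist_le)
  have "\<forall>n. \<exists>m\<in>M. norm (x - m) < d + 1/(Suc n)"
    using infdist_approx[OF ne] by (simp add: d_def dist_norm)
  then obtain s where sM: "\<And>n. s n \<in> M" and sd: "\<And>n. norm (x - s n) < d + 1/(Suc n)"
    by metis
  have key: "(norm (s n - s k))\<^sup>2 \<le> 2*((d + 1/Suc n)\<^sup>2 - d\<^sup>2) + 2*((d + 1/Suc k)\<^sup>2 - d\<^sup>2)" for n k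
  proof -
    have mid: "(s n + s k) /\<^sub>R 2 \<in> M" using sub sM by (simp add: subspace_add subspace_scale)
    have "norm ((x - s n) + (x - s k)) = 2 * norm (x - (s n + s k) /\<^sub>R 2)"
    proof -
      have "(x - s n) + (x - s k) = 2 *\<^sub>R (x - (s n + s k) /\<^sub>R 2)"
        by (simp add: algebra_simps scaleR_2)
      then show ?thesis by simp
    qed
    then have h: "norm (((x - s n) + (x - s k)) /\<^sub>R 2) \<ge> d"
      using dle[OF mid] by simp
    have eq: "(norm (s n - s k))\<^sup>2 = 2*(norm (x - s n))\<^sup>2 + 2*(norm (x - s k))\<^sup>2 - 4*(norm (((x - s n) + (x - s k)) /\<^sub>R 2))\<^sup>2"
      using parallelogram_mid[of "x - s n" "x - s k"] by (simp add: norm_minus_commute)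
    have "d\<^sup>2 \<le> (norm (((x - s n) + (x - s k)) /\<^sub>R 2))\<^sup>2" using h d0 by (simp add: power_mono)
    moreover have "(norm (x - s n))\<^sup>2 \<le> (d + 1/Suc n)\<^sup>2" using sd[of n] by (simp add: power_mono)
    moreover have "(norm (x - s k))\<^sup>2 \<le> (d + 1/Suc k)\<^sup>2" using sd[of k] by (simp add: power_mono)
    ultimately show ?thesis using eq by (simp only: algebra_simps)
  qed
  have lim0: "(\<lambda>n. (d + 1/Suc n)\<^sup>2 - d\<^sup>2) \<longlonglongrightarrow> 0"
  proof -
    have "(\<lambda>n. 1 / real (Suc n)) \<longlonglongrightarrow> 0" using LIMSEQ_inverse_real_of_nat by (simp add: inverse_eq_divide)
    then have "(\<lambda>n. (d + 1/Suc n)\<^sup>2 - d\<^sup>2) \<longlonglongrightarrow> (d + 0)\<^sup>2 - d\<^sup>2"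
      by (intro tendsto_intros)
    then show ?thesis by simp
  qed
  have "Cauchy s"
  proof (rule metric_CauchyI)
    fix e :: real assume e: "e > 0"
    have "\<forall>\<^sub>F n in sequentially. (d + 1/Suc n)\<^sup>2 - d\<^sup>2 < e\<^sup>2 / 4"
      using order_tendstoD(2)[OF lim0, of "e\<^sup>2 / 4"] e by simp
    then obtain N where N: "\<And>n. n \<ge> N \<Longrightarrow> (d + 1/Suc n)\<^sup>2 - d\<^sup>2 < e\<^sup>2 / 4"
      by (auto simp: eventually_sequentially)
    show "\<exists>N. \<forall>m\<ge>N. \<forall>n\<ge>N. dist (s m) (s n) < e"
    proof (intro exI allI impI)
      fix m n assume mN: "m \<ge> N" and nN: "n \<ge> N"
      have "(norm (s m - s n))\<^sup>2 < e\<^sup>2"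
        using aux_ineq[OF key[of m n] N[OF mN] N[OF nN]] .
      then show "dist (s m) (s n) < e" using e
        by (simp add: dist_norm power_less_imp_less_base)
    qed
  qed
  then obtain p where sp: "s \<longlonglongrightarrow> p" using complete_UNIV convergent_eq_Cauchy by blast
  have pM: "p \<in> M" using cl sM sp closed_sequentially by blast
  have "(\<lambda>n. norm (x - s n)) \<longlonglongrightarrow> norm (x - p)" using sp by (intro tendsto_intros)
  moreover have "(\<lambda>n. d + 1/Suc n) \<longlonglongrightarrow> d + 0"
    using LIMSEQ_inverse_real_of_nat by (intro tendsto_intros) (simp add: inverse_eq_divide)
  ultimately have "norm (x - p) \<le> d"
    using sd by (intro LIMSEQ_le) (auto intro: less_imp_le)
  then have pd: "norm (x - p) = d" using dle[OF pM] by simp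
  have "inner (x - p) m = 0" if mM: "m \<in> M" for m
  proof -
    have quad: "0 \<le> t\<^sup>2 * inner m m - 2 * t * inner (x - p) m" for t
    proof -
      have "p + t *\<^sub>R m \<in> M" using sub pM mM by (simp add: subspace_add subspace_scale)
      then have "d \<le> norm (x - (p + t *\<^sub>R m))" by (rule dle)
      then have "(norm (x - p))\<^sup>2 \<le> (norm (x - (p + t *\<^sub>R m)))\<^sup>2"
        using pd d0 by (simp add: power_mono)
      also have "x - (p + t *\<^sub>R m) = (x - p) - t *\<^sub>R m" by simp
      finally have "inner (x-p) (x-p) \<le> inner ((x - p) - t *\<^sub>R m) ((x - p) - t *\<^sub>R m)"
        by (simp only: power2_norm_eq_inner)
      also have "inner ((x - p) - t *\<^sub>R m) ((x - p) - t *\<^sub>R m) = inner (x-p) (x-p) - 2*t*inner (x-p) m + t\<^sup>2 * inner m m"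
        by (rule inner_expand_sq)
      finally show ?thesis by linarith
    qed
    show ?thesis
    proof (rule ccontr)
      assume ne0: "inner (x - p) m \<noteq> 0"
      then have mm: "inner m m > 0"
        using ne0 by (metis inner_gt_zero_iff inner_zero_right)
      define t where "t = inner (x - p) m / inner m m"
      have "0 \<le> t\<^sup>2 * inner m m - 2 * t * inner (x - p) m" by (rule quad)
      also have "\<dots> = - (inner (x - p) m)\<^sup>2 / inner m m"
        using mm by (simp add: t_def power2_eq_square field_simps)
      finally have "0 \<le> - (inner (x - p) m)\<^sup>2 / inner m m" .
      moreover have "(inner (x - p) m)\<^sup>2 / inner m m > 0" using ne0 mm by simp
      ultimately show False by linarith
    qed
  qed
  then show ?thesis using pM by blast
qed


lemma subspace_closure':
  fixes M :: "'a::real_normed_vector set"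
  assumes "subspace M" shows "subspace (closure M)"
  unfolding subspace_def
proof (intro conjI ballI allI)
  show "0 \<in> closure M" using assms subspace_0 closure_subset by blast
next
  fix x y assume x: "x \<in> closure M" and y: "y \<in> closure M"
  obtain a where a: "\<And>n. a n \<in> M" "a \<longlonglongrightarrow> x" using x unfolding closure_sequential by blast
  obtain b where b: "\<And>n. b n \<in> M" "b \<longlonglongrightarrow> y" using y unfolding closure_sequential by blast
  have "(\<lambda>n. a n + b n) \<longlonglongrightarrow> x + y" using a b by (intro tendsto_intros)
  moreover have "\<And>n. a n + b n \<in> M" using a b assms by (simp add: subspace_add)
  ultimately show "x + y \<in> closure M" unfolding closure_sequential by (intro exI[of _ "\<lambda>n. a n + b n"] conjI allI)
next
  fix c :: real and x assume x: "x \<in> closure M"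
  obtain a where a: "\<And>n. a n \<in> M" "a \<longlonglongrightarrow> x" using x unfolding closure_sequential by blast
  have "(\<lambda>n. c *\<^sub>R a n) \<longlonglongrightarrow> c *\<^sub>R x" using a by (intro tendsto_intros)
  moreover have "\<And>n. c *\<^sub>R a n \<in> M" using a assms by (simp add: subspace_scale)
  ultimately show "c *\<^sub>R x \<in> closure M" unfolding closure_sequential by (intro exI[of _ "\<lambda>n. c *\<^sub>R a n"] conjI allI)
qed

lemma orth_closure:
  fixes M :: "'a::real_inner set"
  assumes "\<forall>m\<in>M. inner x m = 0" "y \<in> closure M"
  shows "inner x y = 0"
proof -
  obtain a where a: "\<And>n. a n \<in> M" "a \<longlonglongrightarrow> y" using assms(2) unfolding closure_sequential by blast
  have "(\<lambda>n. inner x (a n)) \<longlonglongrightarrow> inner x y" using a by (intro tendsto_intros)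
  moreover have "(\<lambda>n. inner x (a n)) = (\<lambda>n. 0)" using a assms(1) by auto
  ultimately show ?thesis using LIMSEQ_unique tendsto_const by metis
qed

lemma dense_of_orth:
  fixes M :: "'a::{real_inner,complete_space} set"
  assumes "subspace M" "\<And>x. (\<forall>m\<in>M. inner x m = 0) \<Longrightarrow> x = 0"
  shows "closure M = UNIV"
proof -
  have "x \<in> closure M" for x
  proof -
    obtain p where p: "p \<in> closure M" "\<forall>m\<in>closure M. inner (x - p) m = 0"
      using projection_exists[OF subspace_closure'[OF assms(1)], of x] by auto
    then have "\<forall>m\<in>M. inner (x - p) m = 0" using closure_subset by blast
    then have "x - p = 0" by (rule assms(2))
    then show ?thesis using p by simp
  qed
  then show ?thesis by auto
qed

lemma riesz_dense:
  fixes M :: "'a::{real_inner,complete_space} set" and \<phi> :: "'a \<Rightarrow> real"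
  assumes sub: "subspace M"
    and add: "\<And>x y. x \<in> M \<Longrightarrow> y \<in> M \<Longrightarrow> \<phi> (x + y) = \<phi> x + \<phi> y"
    and scl: "\<And>c x. x \<in> M \<Longrightarrow> \<phi> (c *\<^sub>R x) = c * \<phi> x"
    and bnd: "\<And>x. x \<in> M \<Longrightarrow> \<bar>\<phi> x\<bar> \<le> K * norm x"
  shows "\<exists>w. \<forall>z\<in>M. \<phi> z = inner z w"
proof (cases "\<forall>z\<in>M. \<phi> z = 0")
  case True then show ?thesis by (intro exI[of _ 0]) simp
next
  case False
  then obtain z1 where z1: "z1 \<in> M" "\<phi> z1 \<noteq> 0" by auto
  define z0 where "z0 = (1 / \<phi> z1) *\<^sub>R z1"
  have z0: "z0 \<in> M" "\<phi> z0 = 1" using z1 sub by (auto simp: z0_def scl subspace_scale)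
  define N where "N = {z\<in>M. \<phi> z = 0}"
  have subN: "subspace N" unfolding N_def subspace_def
  proof (intro conjI ballI allI)
    show "0 \<in> {z \<in> M. \<phi> z = 0}" using sub scl[of 0 0] subspace_0 by fastforce
  next
    fix x y assume "x \<in> {z \<in> M. \<phi> z = 0}" "y \<in> {z \<in> M. \<phi> z = 0}"
    then show "x + y \<in> {z \<in> M. \<phi> z = 0}" using add sub subspace_add by auto
  next
    fix c x assume "x \<in> {z \<in> M. \<phi> z = 0}"
    then show "c *\<^sub>R x \<in> {z \<in> M. \<phi> z = 0}" using scl sub subspace_scale by auto
  qed
  obtain q where q: "q \<in> closure N" "\<forall>m\<in>closure N. inner (z0 - q) m = 0"
    using projection_exists[OF subspace_closure'[OF subN], of z0] by auto
  define p where "p = z0 - q"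
  have pN: "\<forall>m\<in>N. inner p m = 0" using q closure_subset p_def by blast
  have pp: "inner z0 p = inner p p"
  proof -
    have "inner q p = 0" using q p_def by (simp add: inner_commute)
    then show ?thesis by (simp add: p_def inner_diff_left)
  qed
  have pnz: "p \<noteq> 0"
  proof
    assume "p = 0"
    then have "z0 \<in> closure N" using q p_def by simp
    then obtain a where a: "\<And>n. a n \<in> N" "a \<longlonglongrightarrow> z0" unfolding closure_sequential by blast
    have "(\<lambda>n. K * norm (z0 - a n)) \<longlonglongrightarrow> K * norm (z0 - z0)" using a by (intro tendsto_intros)
    then have lim: "(\<lambda>n. K * norm (z0 - a n)) \<longlonglongrightarrow> 0" by simp
    have "\<phi> (z0 - a n) = 1" for n
    proof -
      have aM: "a n \<in> M" "\<phi> (a n) = 0" using a N_def by auto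
      have "z0 - a n = z0 + (-1) *\<^sub>R a n" by simp
      moreover have "(-1) *\<^sub>R a n \<in> M" using aM sub subspace_scale by blast
      ultimately show ?thesis using add[of z0 "(-1) *\<^sub>R a n"] scl[of "a n" "-1"] aM z0
        by simp
    qed
    moreover have "z0 - a n \<in> M" for n using a N_def z0 sub subspace_diff by blast
    ultimately have "\<And>n. 1 \<le> K * norm (z0 - a n)" using bnd by (metis abs_one)
    then have "1 \<le> (0::real)" using lim by (intro LIMSEQ_le_const) auto
    then show False by simp
  qed
  define w where "w = (1 / inner p p) *\<^sub>R p"
  have ppos: "inner p p > 0" using pnz by simp
  have "\<phi> z = inner z w" if zM: "z \<in> M" for z
  proof -
    have "z - \<phi> z *\<^sub>R z0 \<in> N"
    proof -
      have "z - \<phi> z *\<^sub>R z0 = z + (- \<phi> z) *\<^sub>R z0" by simp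
      moreover have "\<phi> (z + (- \<phi> z) *\<^sub>R z0) = 0"
      proof -
        have "(- \<phi> z) *\<^sub>R z0 \<in> M" using z0 sub subspace_scale by blast
        then have "\<phi> (z + (- \<phi> z) *\<^sub>R z0) = \<phi> z + \<phi> ((- \<phi> z) *\<^sub>R z0)" using add zM by blast
        also have "\<phi> ((- \<phi> z) *\<^sub>R z0) = (- \<phi> z) * \<phi> z0" by (rule scl[OF z0(1)])
        finally show ?thesis using z0(2) by simp
      qed
      moreover have "z + (- \<phi> z) *\<^sub>R z0 \<in> M" using zM z0 sub subspace_scale subspace_add by blast
      ultimately show ?thesis unfolding N_def by simp
    qed
    then have "inner p (z - \<phi> z *\<^sub>R z0) = 0" using pN by blast
    then have "inner p z = \<phi> z * inner p z0" by (simp add: inner_diff_right)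
    then have "inner z p = \<phi> z * inner p p" using pp by (simp add: inner_commute)
    then show ?thesis using ppos by (simp add: w_def)
  qed
  then show ?thesis by blast
qed


lemma coercive_norm:
  fixes A :: "'a::real_inner \<Rightarrow> 'a"
  assumes "\<forall>u\<in>D. inner (A u) u \<ge> \<omega> * (norm u)\<^sup>2" "\<omega> > 0" "u \<in> D"
  shows "\<omega> * norm u \<le> norm (A u)"
proof (cases "u = 0")
  case True then show ?thesis by simp
next
  case False
  have "\<omega> * (norm u)\<^sup>2 \<le> inner (A u) u" using assms by blast
  also have "\<dots> \<le> norm (A u) * norm u" by (rule norm_cauchy_schwarz)
  finally have "(\<omega> * norm u) * norm u \<le> norm (A u) * norm u" by (simp add: power2_eq_square mult.assoc)
  then show ?thesis using False by simp
qed

lemma lin_op_sub: "lin_op D A \<Longrightarrow> subspace D" by (simp add: lin_op_def)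
lemma lin_op_add: "lin_op D A \<Longrightarrow> x \<in> D \<Longrightarrow> y \<in> D \<Longrightarrow> A (x + y) = A x + A y"
  unfolding lin_op_def by blast
lemma lin_op_scale: "lin_op D A \<Longrightarrow> x \<in> D \<Longrightarrow> A (c *\<^sub>R x) = c *\<^sub>R A x"
  unfolding lin_op_def by blast

lemma lin_op_neg:
  assumes "lin_op D A" "y \<in> D"
  shows "A (- y) = - A y"
  using lin_op_scale[OF assms, of "-1"] by simp

lemma lin_op_diff:
  assumes "lin_op D A" "x \<in> D" "y \<in> D"
  shows "A (x - y) = A x - A y"
proof -
  have sub: "subspace D" using assms(1) by (simp add: lin_op_def)
  have my: "- y \<in> D" using sub assms(3) subspace_neg by blast
  have "A (x + - y) = A x + A (- y)" using lin_op_add[OF assms(1,2) my] .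
  then show ?thesis using lin_op_neg[OF assms(1,3)] by simp
qed

lemma lin_op_0:
  assumes "lin_op D A" shows "A 0 = 0"
  using lin_op_scale[OF assms subspace_0[OF lin_op_sub[OF assms]], of 0] by simp

lemma coercive_inj:
  fixes A :: "'a::real_inner \<Rightarrow> 'a"
  assumes "lin_op D A" "\<forall>u\<in>D. inner (A u) u \<ge> \<omega> * (norm u)\<^sup>2" "\<omega> > 0"
  shows "inj_on A D"
proof (rule inj_onI)
  fix x y assume xy: "x \<in> D" "y \<in> D" "A x = A y"
  have sub: "subspace D" using assms(1) by (simp add: lin_op_def)
  have "x - y \<in> D" using sub xy subspace_diff by blast
  then have "\<omega> * norm (x - y) \<le> norm (A (x - y))" using coercive_norm assms by blast
  also have "A (x - y) = 0" using lin_op_diff[OF assms(1) xy(1,2)] xy(3) by simp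
  finally show "x = y" using assms(3) by (simp add: mult_le_0_iff)
qed

lemma coercive_surj:
  fixes A :: "'a::{real_inner,complete_space} \<Rightarrow> 'a"
  assumes lin: "lin_op D A" and cl: "closed_op D A" and sa: "self_adjoint D A"
    and co: "\<forall>u\<in>D. inner (A u) u \<ge> \<omega> * (norm u)\<^sup>2" and om: "\<omega> > 0"
  shows "A ` D = UNIV"
proof -
  have sub: "subspace D" using lin by (simp add: lin_op_def)
  have subR: "subspace (A ` D)"
    unfolding subspace_def
  proof (intro conjI ballI allI)
    have "0 = A 0" using lin_op_0[OF lin] by simp
    then show "0 \<in> A ` D" using subspace_0[OF sub] by (rule image_eqI)
  next
    fix x y assume "x \<in> A ` D" "y \<in> A ` D"
    then obtain a b where ab: "a \<in> D" "b \<in> D" "x = A a" "y = A b" by auto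
    then have "x + y = A (a + b)" using lin by (simp add: lin_op_def)
    moreover have "a + b \<in> D" using ab sub subspace_add by blast
    ultimately show "x + y \<in> A ` D" by blast
  next
    fix c :: real and x assume "x \<in> A ` D"
    then obtain a where a: "a \<in> D" "x = A a" by auto
    then have "c *\<^sub>R x = A (c *\<^sub>R a)" using lin by (simp add: lin_op_def)
    moreover have "c *\<^sub>R a \<in> D" using a sub subspace_scale by blast
    ultimately show "c *\<^sub>R x \<in> A ` D" by blast
  qed
  have closedR: "closed (A ` D)"
  proof (rule closed_sequential_limits[THEN iffD2], intro allI impI, elim conjE)
    fix y l assume yR: "\<forall>n. y n \<in> A ` D" and yl: "y \<longlonglongrightarrow> l"
    have "\<forall>n. \<exists>v. v \<in> D \<and> y n = A v" using yR by blast
    define u where "u n = (SOME v. v \<in> D \<and> y n = A v)" for n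
    have u: "\<And>n. u n \<in> D" "\<And>n. y n = A (u n)"
      using someI_ex[OF spec[OF \<open>\<forall>n. \<exists>v. v \<in> D \<and> y n = A v\<close>]] unfolding u_def by blast+
    have "Cauchy y" using yl by (rule LIMSEQ_imp_Cauchy)
    have "Cauchy u"
    proof (rule metric_CauchyI)
      fix e :: real assume e: "e > 0"
      have "\<omega> * e > 0" using e om by simp
      from metric_CauchyD[OF \<open>Cauchy y\<close> this] obtain N where
        N0: "\<forall>m\<ge>N. \<forall>n\<ge>N. dist (y m) (y n) < \<omega> * e" by blast
      have N: "\<And>m n. m \<ge> N \<Longrightarrow> n \<ge> N \<Longrightarrow> dist (y m) (y n) < \<omega> * e" using N0 by blast
      show "\<exists>N. \<forall>m\<ge>N. \<forall>n\<ge>N. dist (u m) (u n) < e"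
      proof (intro exI allI impI)
        fix m n assume mn: "m \<ge> N" "n \<ge> N"
        have d: "u m - u n \<in> D" using u sub subspace_diff by blast
        have "\<omega> * norm (u m - u n) \<le> norm (A (u m - u n))" using coercive_norm[OF co om d] .
        also have "A (u m - u n) = y m - y n" using lin_op_diff[OF lin u(1) u(1)] u(2) by simp
        finally have "\<omega> * norm (u m - u n) < \<omega> * e" using N[OF mn] by (simp add: dist_norm)
        then show "dist (u m) (u n) < e" using om by (simp add: dist_norm)
      qed
    qed
    then obtain x where ux: "u \<longlonglongrightarrow> x" using complete_UNIV convergent_eq_Cauchy by blast
    have lim: "(\<lambda>n. (u n, A (u n))) \<longlonglongrightarrow> (x, l)"
    proof -
      have "(\<lambda>n. A (u n)) = y" using u(2) by auto
      then show ?thesis using ux yl by (simp add: tendsto_Pair)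
    qed
    have mem: "\<And>n. (u n, A (u n)) \<in> {(x, A x) | x. x \<in> D}" using u by blast
    have G: "closed {(x, A x) | x. x \<in> D}" using cl unfolding closed_op_def .
    have "(x, l) \<in> {(x, A x) | x. x \<in> D}"
      by (rule closed_sequentially[OF G mem lim])
    then show "l \<in> A ` D" by auto
  qed
  have "closure (A ` D) = UNIV"
  proof (rule dense_of_orth[OF subR])
    fix v assume v: "\<forall>m\<in>A ` D. inner v m = 0"
    then have "\<forall>u\<in>D. inner (A u) v = inner u 0" by (simp add: inner_commute)
    then have "v \<in> adj_dom D A" unfolding adj_dom_def by blast
    then have vD: "v \<in> D" using sa by (simp add: self_adjoint_def)
    then have "inner (A v) v = 0" using v by (simp add: inner_commute)
    moreover have "\<omega> * (norm v)\<^sup>2 \<le> inner (A v) v" using co vD by blast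
    ultimately have "\<omega> * (norm v)\<^sup>2 \<le> 0" by simp
    then show "v = 0" using om by (simp add: mult_le_0_iff)
  qed
  then show ?thesis using closure_closed[OF closedR] by simp
qed


definition good_op :: "'a::real_inner set \<Rightarrow> ('a \<Rightarrow> 'a) \<Rightarrow> real \<Rightarrow> bool" where
  "good_op D A \<omega> \<longleftrightarrow> lin_op D A \<and> closed_op D A \<and> self_adjoint D A \<and> \<omega> > 0 \<and>
     (\<forall>u\<in>D. inner (A u) u \<ge> \<omega> * (norm u)\<^sup>2)"

context
  fixes D :: "'a::{real_inner,complete_space} set" and A :: "'a \<Rightarrow> 'a" and \<omega> :: real
  assumes good: "good_op D A \<omega>"
begin

lemma g_lin: "lin_op D A" and g_om: "\<omega> > 0" and g_co: "\<forall>u\<in>D. inner (A u) u \<ge> \<omega> * (norm u)\<^sup>2"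
  and g_sa: "self_adjoint D A" and g_cl: "closed_op D A"
  using good by (auto simp: good_op_def)

lemma g_sub: "subspace D" using g_lin by (simp add: lin_op_def)

lemma g_sym: "u \<in> D \<Longrightarrow> v \<in> D \<Longrightarrow> inner (A u) v = inner u (A v)"
  using g_sa by (simp add: self_adjoint_def)

lemma g_surj: "A ` D = UNIV"
  using coercive_surj[OF g_lin g_cl g_sa g_co g_om] .

lemma g_inj: "inj_on A D"
  using coercive_inj[OF g_lin g_co g_om] .

lemma B_mem: "inv_into D A x \<in> D"
  using g_surj by (metis UNIV_I inv_into_into)

lemma AB: "A (inv_into D A x) = x"
  using g_surj by (metis UNIV_I f_inv_into_f)

lemma BA: "u \<in> D \<Longrightarrow> inv_into D A (A u) = u"
  using g_inj by (rule inv_into_f_f)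

lemma B_add: "inv_into D A (x + y) = inv_into D A x + inv_into D A y"
proof -
  have "A (inv_into D A x + inv_into D A y) = x + y"
    using lin_op_add[OF g_lin B_mem B_mem] AB by simp
  moreover have "inv_into D A x + inv_into D A y \<in> D" using g_sub B_mem subspace_add by blast
  ultimately show ?thesis using BA by metis
qed

lemma B_scale: "inv_into D A (c *\<^sub>R x) = c *\<^sub>R inv_into D A x"
proof -
  have "A (c *\<^sub>R inv_into D A x) = c *\<^sub>R x"
    using lin_op_scale[OF g_lin B_mem] AB by simp
  moreover have "c *\<^sub>R inv_into D A x \<in> D" using g_sub B_mem subspace_scale by blast
  ultimately show ?thesis using BA by metis
qed

lemma B_norm: "\<omega> * norm (inv_into D A x) \<le> norm x"
  using coercive_norm[OF g_co g_om B_mem] AB by simp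

lemma B_bl: "bounded_linear (inv_into D A)"
proof (rule bounded_linear_intro[where K="1/\<omega>"])
  show "inv_into D A (x + y) = inv_into D A x + inv_into D A y" for x y by (rule B_add)
  show "inv_into D A (r *\<^sub>R x) = r *\<^sub>R inv_into D A x" for r x by (rule B_scale)
  show "norm (inv_into D A x) \<le> norm x * (1 / \<omega>)" for x
    using B_norm[of x] g_om by (simp add: field_simps)
qed

lemma B_sym: "inner (inv_into D A x) y = inner x (inv_into D A y)"
  using g_sym[OF B_mem B_mem, of x y] AB by simp

lemma B_pos: "inner (inv_into D A x) x \<ge> \<omega> * (norm (inv_into D A x))\<^sup>2"
  using g_co B_mem[of x] AB[of x] by (metis inner_commute)

end


definition sq_coef :: "nat \<Rightarrow> real" where
  "sq_coef k = pochhammer (-1/2) k / fact k"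

lemma sq_coef_0: "sq_coef 0 = 1" by (simp add: sq_coef_def)

lemma sq_coef_Suc: "sq_coef (Suc k) = - (1/2) * pochhammer (1/2) k / fact (Suc k)"
  unfolding sq_coef_def by (simp add: pochhammer_rec)

lemma sq_coef_nonpos: "k \<ge> 1 \<Longrightarrow> sq_coef k \<le> 0"
proof -
  assume "k \<ge> 1"
  then obtain j where "k = Suc j" by (cases k) auto
  moreover have "pochhammer (1/2::real) j \<ge> 0" by (simp add: pochhammer_nonneg)
  ultimately show ?thesis by (simp add: sq_coef_Suc divide_nonpos_pos)
qed

lemma sq_coef_psum: "(\<Sum>k<Suc n. sq_coef k) = pochhammer (1/2) n / fact n"
proof (induction n)
  case 0 then show ?case by (simp add: sq_coef_0)
next
  case (Suc n)
  have "(\<Sum>k<Suc (Suc n). sq_coef k) = pochhammer (1/2) n / fact n + sq_coef (Suc n)"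
    using Suc by simp
  also have "\<dots> = pochhammer (1/2) (Suc n) / fact (Suc n)"
  proof -
    have f: "fact (Suc n) = (real n + 1) * fact n" by simp
    have fp: "(fact n :: real) > 0" by simp
    have gen: "p / f + - (1/2) * p / ((x + 1) * f) = (1/2 + x) * p / ((x + 1) * f)"
      if "f > 0" "x \<ge> 0" for p f x :: real
    proof -
      have e1: "p / f = (x+1)*p / ((x+1)*f)" using that by simp
      have e2: "(x+1)*p / ((x+1)*f) + - (1/2) * p / ((x + 1) * f) = ((x+1)*p + - (1/2) * p) / ((x + 1) * f)"
        by (rule add_divide_distrib[symmetric])
      have e3: "(x+1)*p + - (1/2) * p = (1/2 + x) * p" by (simp add: algebra_simps)
      show ?thesis unfolding e1 e2 e3 ..
    qed
    show ?thesis unfolding sq_coef_Suc pochhammer_rec' f using gen[OF fp, of "real n"] by simp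
  qed
  finally show ?case .
qed

lemma sq_coef_psum_nonneg: "(\<Sum>k<n. sq_coef k) \<ge> 0"
proof (cases n)
  case 0 then show ?thesis by simp
next
  case (Suc m) then show ?thesis unfolding Suc sq_coef_psum by (simp add: pochhammer_nonneg)
qed

lemma sq_coef_abs_psum: "(\<Sum>k<n. \<bar>sq_coef k\<bar>) \<le> 2"
proof (cases n)
  case 0 then show ?thesis by simp
next
  case (Suc m)
  have "(\<Sum>k<Suc m. \<bar>sq_coef k\<bar>) = 2 - (\<Sum>k<Suc m. sq_coef k)"
  proof (induction m)
    case 0 then show ?case by (simp add: sq_coef_0)
  next
    case (Suc m)
    then show ?case using sq_coef_nonpos[of "Suc m"] by simp
  qed
  then show ?thesis using Suc sq_coef_psum_nonneg[of "Suc m"] by simp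
qed

lemma sq_coef_summable: "summable (\<lambda>k. \<bar>sq_coef k\<bar>)"
  by (rule summableI_nonneg_bounded[where x=2]) (auto simp: sq_coef_abs_psum)

lemma sq_coef_gchoose: "sq_coef k = ((1/2::real) gchoose k) * (-1)^k"
  unfolding sq_coef_def gbinomial_pochhammer by (simp add: power_mult_distrib[symmetric])

lemma sq_coef_conv: "(\<Sum>i\<le>k. sq_coef i * sq_coef (k - i)) = (if k = 0 then 1 else if k = 1 then -1 else 0)"
proof -
  have "(\<Sum>i\<le>k. sq_coef i * sq_coef (k - i)) = (\<Sum>i\<le>k. ((1/2::real) gchoose i) * ((1/2) gchoose (k - i)) * (-1)^k)"
  proof (rule sum.cong)
    fix i assume "i \<in> {..k}"
    then have "(-1::real)^i * (-1)^(k-i) = (-1)^k" by (simp add: power_add[symmetric])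
    then show "sq_coef i * sq_coef (k - i) = ((1/2::real) gchoose i) * ((1/2) gchoose (k - i)) * (-1)^k"
      unfolding sq_coef_gchoose by (metis (no_types, lifting) mult.assoc mult.left_commute)
  qed simp
  also have "\<dots> = (\<Sum>i\<le>k. ((1/2::real) gchoose i) * ((1/2) gchoose (k - i))) * (-1)^k"
    by (simp add: sum_distrib_right)
  also have "(\<Sum>i\<le>k. ((1/2::real) gchoose i) * ((1/2) gchoose (k - i))) = (1/2 + 1/2) gchoose k"
    using gbinomial_Vandermonde[of "1/2::real" "1/2" k] by (simp add: atLeast0AtMost)
  also have "((1/2 + 1/2 :: real) gchoose k) = of_nat (1 choose k)"
    using binomial_gbinomial[of 1 k, where 'a=real] by simp
  finally show ?thesis
    by (cases k) (auto simp: binomial_eq_0)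
qed


lemma summable_Cauchy_rev':
  fixes f :: "nat \<Rightarrow> 'a::{real_normed_vector,complete_space}"
  assumes r: "\<forall>e>0. \<exists>N. \<forall>m\<ge>N. \<forall>n. norm (sum f {m..<n}) < e"
  shows "summable f"
    unfolding summable_iff_convergent Cauchy_convergent_iff [symmetric] Cauchy_iff
  proof clarify
    fix e :: real
    assume "0 < e"
    with r obtain N where N: "\<And>m n. m \<ge> N \<Longrightarrow> norm (sum f {m..<n}) < e"
      by blast
    have "norm (sum f {..<m} - sum f {..<n}) < e" if "m\<ge>N" "n\<ge>N" for m n
    proof (cases m n rule: linorder_class.le_cases)
      assume "m \<le> n"
      then show ?thesis
        by (metis N finite_lessThan lessThan_minus_lessThan lessThan_subset_iff norm_minus_commute sum_diff \<open>m\<ge>N\<close>)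
    next
      assume "n \<le> m"
      then show ?thesis
        by (metis N finite_lessThan lessThan_minus_lessThan lessThan_subset_iff sum_diff \<open>n\<ge>N\<close>)
    qed
    then show "\<exists>M. \<forall>m\<ge>M. \<forall>n\<ge>M. norm (sum f {..<m} - sum f {..<n}) < e"
      by blast
  qed

lemma summable_norm_cancel':
  fixes f :: "nat \<Rightarrow> 'a::{real_normed_vector,complete_space}"
  assumes "summable (\<lambda>n. norm (f n))" shows "summable f"
proof (rule summable_Cauchy_rev', intro allI impI)
  fix e :: real assume "e > 0"
  then obtain N where N: "\<forall>m\<ge>N. \<forall>n. norm (sum (\<lambda>n. norm (f n)) {m..<n}) < e"
    using assms unfolding summable_Cauchy by blast
  show "\<exists>N. \<forall>m\<ge>N. \<forall>n. norm (sum f {m..<n}) < e"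
  proof (intro exI allI impI)
    fix m n assume "m \<ge> N"
    then have "norm (sum (\<lambda>n. norm (f n)) {m..<n}) < e" using N by blast
    moreover have "norm (sum f {m..<n}) \<le> norm (sum (\<lambda>n. norm (f n)) {m..<n})"
      using norm_sum[of f "{m..<n}"] by simp
    ultimately show "norm (sum f {m..<n}) < e" by linarith
  qed
qed

lemma summable_norm':
  fixes f :: "nat \<Rightarrow> 'a::{real_normed_vector,complete_space}"
  assumes "summable (\<lambda>n. norm (f n))" shows "norm (suminf f) \<le> (\<Sum>n. norm (f n))"
proof -
  have s: "summable f" using assms by (rule summable_norm_cancel')
  have l1: "(\<lambda>n. norm (\<Sum>i<n. f i)) \<longlonglongrightarrow> norm (suminf f)"
    using summable_LIMSEQ[OF s] by (rule tendsto_norm)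
  have l2: "(\<lambda>n. \<Sum>i<n. norm (f i)) \<longlonglongrightarrow> (\<Sum>n. norm (f n))"
    using assms by (rule summable_LIMSEQ)
  show ?thesis using l1 l2 by (rule LIMSEQ_le) (auto intro: norm_sum)
qed

definition sqQ :: "('a::real_normed_vector \<Rightarrow> 'a) \<Rightarrow> 'a \<Rightarrow> 'a" where
  "sqQ P x = (\<Sum>k. sq_coef k *\<^sub>R (P ^^ k) x)"

context
  fixes P :: "'a::{real_inner,complete_space} \<Rightarrow> 'a"
  assumes Pbl: "bounded_linear P"
    and Psym: "\<And>x y. inner (P x) y = inner x (P y)"
    and Pnorm: "\<And>x. norm (P x) \<le> norm x"
begin

lemma pw_bl: "bounded_linear (P ^^ k)"
proof (induction k)
  case 0 then show ?case by (simp add: bounded_linear_ident[unfolded id_def] id_def)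
next
  case (Suc k) then show ?case using Pbl by (simp add: bounded_linear_compose)
qed

lemma pw_norm: "norm ((P ^^ k) x) \<le> norm x"
proof (induction k)
  case 0 then show ?case by simp
next
  case (Suc k) then show ?case using Pnorm[of "(P ^^ k) x"] by simp
qed

lemma pw_sym: "inner ((P ^^ k) x) y = inner x ((P ^^ k) y)"
proof (induction k arbitrary: x y)
  case 0 then show ?case by simp
next
  case (Suc k)
  have "inner ((P ^^ Suc k) x) y = inner (P ((P ^^ k) x)) y" by simp
  also have "\<dots> = inner ((P ^^ k) x) (P y)" by (rule Psym)
  also have "\<dots> = inner x ((P ^^ k) (P y))" by (rule Suc)
  also have "(P ^^ k) (P y) = (P ^^ Suc k) y" by (simp add: funpow_swap1)
  finally show ?case .
qed

lemma pw_inner_le: "inner ((P ^^ k) x) x \<le> (norm x)\<^sup>2"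
proof -
  have "inner ((P ^^ k) x) x \<le> norm ((P ^^ k) x) * norm x" by (rule norm_cauchy_schwarz)
  also have "\<dots> \<le> norm x * norm x" using pw_norm by (simp add: mult_right_mono)
  finally show ?thesis by (simp add: power2_eq_square)
qed

lemma term_norm_summable: "summable (\<lambda>k. norm (sq_coef k *\<^sub>R (P ^^ k) x))"
proof (rule summable_comparison_test[where g="\<lambda>k. \<bar>sq_coef k\<bar> * norm x"])
  show "\<exists>N. \<forall>n\<ge>N. norm (norm (sq_coef n *\<^sub>R (P ^^ n) x)) \<le> \<bar>sq_coef n\<bar> * norm x"
    using pw_norm by (auto intro!: mult_left_mono)
  show "summable (\<lambda>k. \<bar>sq_coef k\<bar> * norm x)"
    using sq_coef_summable by (rule summable_mult2)
qed

lemma term_summable: "summable (\<lambda>k. sq_coef k *\<^sub>R (P ^^ k) x)"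
  by (rule summable_norm_cancel'[OF term_norm_summable])

lemma sqQ_sums: "(\<lambda>k. sq_coef k *\<^sub>R (P ^^ k) x) sums sqQ P x"
  unfolding sqQ_def using term_summable by (rule summable_sums)

lemma sqQ_add: "sqQ P (x + y) = sqQ P x + sqQ P y"
proof -
  have "(\<lambda>k. sq_coef k *\<^sub>R (P ^^ k) x + sq_coef k *\<^sub>R (P ^^ k) y) sums (sqQ P x + sqQ P y)"
    using sqQ_sums sqQ_sums by (rule sums_add)
  moreover have "(\<lambda>k. sq_coef k *\<^sub>R (P ^^ k) (x + y)) = (\<lambda>k. sq_coef k *\<^sub>R (P ^^ k) x + sq_coef k *\<^sub>R (P ^^ k) y)"
    using pw_bl by (simp add: linear_add bounded_linear.linear scaleR_add_right)
  ultimately show ?thesis using sqQ_sums[of "x + y"] sums_unique2 by metis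
qed

lemma sqQ_scale: "sqQ P (c *\<^sub>R x) = c *\<^sub>R sqQ P x"
proof -
  have "(\<lambda>k. c *\<^sub>R (sq_coef k *\<^sub>R (P ^^ k) x)) sums (c *\<^sub>R sqQ P x)"
    using sqQ_sums by (rule sums_scaleR_right)
  moreover have "(\<lambda>k. sq_coef k *\<^sub>R (P ^^ k) (c *\<^sub>R x)) = (\<lambda>k. c *\<^sub>R (sq_coef k *\<^sub>R (P ^^ k) x))"
    using pw_bl by (simp add: linear_scale bounded_linear.linear mult.commute)
  ultimately show ?thesis using sqQ_sums[of "c *\<^sub>R x"] sums_unique2 by metis
qed

lemma sqQ_norm: "norm (sqQ P x) \<le> 2 * norm x"
proof -
  have "norm (sqQ P x) \<le> (\<Sum>k. norm (sq_coef k *\<^sub>R (P ^^ k) x))"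
    unfolding sqQ_def by (rule summable_norm'[OF term_norm_summable])
  also have "\<dots> \<le> (\<Sum>k. \<bar>sq_coef k\<bar> * norm x)"
    using term_norm_summable summable_mult2[OF sq_coef_summable] pw_norm
    by (intro suminf_le) (auto intro!: mult_left_mono)
  also have "\<dots> = (\<Sum>k. \<bar>sq_coef k\<bar>) * norm x"
    using sq_coef_summable by (rule suminf_mult2[symmetric])
  also have "(\<Sum>k. \<bar>sq_coef k\<bar>) \<le> 2"
    using sq_coef_summable sq_coef_abs_psum by (rule suminf_le_const)
  then have "(\<Sum>k. \<bar>sq_coef k\<bar>) * norm x \<le> 2 * norm x" by (simp add: mult_right_mono)
  finally show ?thesis .
qed

lemma sqQ_bl: "bounded_linear (sqQ P)"
proof (rule bounded_linear_intro[where K=2])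
  show "sqQ P (x + y) = sqQ P x + sqQ P y" for x y by (rule sqQ_add)
  show "sqQ P (r *\<^sub>R x) = r *\<^sub>R sqQ P x" for r x by (rule sqQ_scale)
  show "norm (sqQ P x) \<le> norm x * 2" for x using sqQ_norm[of x] by (simp add: mult.commute)
qed

lemma sqQ_inner: "inner (sqQ P x) y = (\<Sum>k. sq_coef k * inner ((P ^^ k) x) y)"
proof -
  have "inner (sqQ P x) y = (\<Sum>k. inner (sq_coef k *\<^sub>R (P ^^ k) x) y)"
    unfolding sqQ_def using term_summable by (rule bounded_linear.suminf[OF bounded_linear_inner_left])
  then show ?thesis by simp
qed

lemma sqQ_sym: "inner (sqQ P x) y = inner x (sqQ P y)"
proof -
  have "inner (sqQ P x) y = (\<Sum>k. sq_coef k * inner ((P ^^ k) x) y)" by (rule sqQ_inner)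
  also have "\<dots> = (\<Sum>k. sq_coef k * inner ((P ^^ k) y) x)"
    by (rule suminf_cong) (metis pw_sym inner_commute)
  also have "\<dots> = inner (sqQ P y) x" by (rule sqQ_inner[symmetric])
  finally show ?thesis by (simp add: inner_commute)
qed

lemma sqQ_pos: "inner (sqQ P x) x \<ge> 0"
proof -
  have summ: "summable (\<lambda>k. sq_coef k * inner ((P ^^ k) x) x)"
  proof -
    have "summable (\<lambda>k. inner (sq_coef k *\<^sub>R (P ^^ k) x) x)"
      using term_summable by (rule bounded_linear.summable[OF bounded_linear_inner_left])
    then show ?thesis by simp
  qed
  have "(\<lambda>n. \<Sum>k<n. sq_coef k * inner ((P ^^ k) x) x) \<longlonglongrightarrow> (\<Sum>k. sq_coef k * inner ((P ^^ k) x) x)"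
    using summ by (rule summable_LIMSEQ)
  moreover have "(\<Sum>k<n. sq_coef k * inner ((P ^^ k) x) x) \<ge> 0" for n
  proof -
    have "(\<Sum>k<n. sq_coef k * (norm x)\<^sup>2) \<le> (\<Sum>k<n. sq_coef k * inner ((P ^^ k) x) x)"
    proof (rule sum_mono)
      fix k assume "k \<in> {..<n}"
      show "sq_coef k * (norm x)\<^sup>2 \<le> sq_coef k * inner ((P ^^ k) x) x"
      proof (cases "k = 0")
        case True then show ?thesis by (simp add: power2_norm_eq_inner)
      next
        case False
        then have "sq_coef k \<le> 0" using sq_coef_nonpos by simp
        then show ?thesis using pw_inner_le[of k x] by (simp add: mult_left_mono_neg)
      qed
    qed
    moreover have "(\<Sum>k<n. sq_coef k * (norm x)\<^sup>2) \<ge> 0"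
      using sq_coef_psum_nonneg[of n] by (simp add: sum_distrib_right[symmetric])
    ultimately show ?thesis by linarith
  qed
  ultimately have "(\<Sum>k. sq_coef k * inner ((P ^^ k) x) x) \<ge> 0"
    by (intro LIMSEQ_le_const) auto
  then show ?thesis using sqQ_inner by simp
qed

lemma sqQ_comm:
  assumes Cbl: "bounded_linear C" and CP: "\<And>x. C (P x) = P (C x)"
  shows "C (sqQ P x) = sqQ P (C x)"
proof -
  have pwc: "C ((P ^^ k) y) = (P ^^ k) (C y)" for k y
    by (induction k) (simp_all add: CP)
  have "C (sqQ P x) = (\<Sum>k. C (sq_coef k *\<^sub>R (P ^^ k) x))"
    unfolding sqQ_def using term_summable by (rule bounded_linear.suminf[OF Cbl])
  also have "\<dots> = (\<Sum>k. sq_coef k *\<^sub>R (P ^^ k) (C x))"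
    using Cbl pwc by (simp add: bounded_linear.linear linear_scale)
  finally show ?thesis by (simp add: sqQ_def)
qed

end


context
  fixes P :: "'a::{real_inner,complete_space} \<Rightarrow> 'a"
  assumes Pbl: "bounded_linear P"
    and Psym: "\<And>x y. inner (P x) y = inner x (P y)"
    and Pnorm: "\<And>x. norm (P x) \<le> norm x"
begin

lemma pw_bl': "bounded_linear (P ^^ k)" using pw_bl[OF Pbl Psym Pnorm] .
lemma pw_norm': "norm ((P ^^ k) x) \<le> norm x" using pw_norm[OF Pbl Psym Pnorm] .

definition Tn :: "nat \<Rightarrow> 'a \<Rightarrow> 'a" where
  "Tn n y = (\<Sum>k<n. sq_coef k *\<^sub>R (P ^^ k) y)"

lemma Tn_lim: "(\<lambda>n. Tn n y) \<longlonglongrightarrow> sqQ P y"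
  using sqQ_sums[OF Pbl Psym Pnorm, of y] unfolding sums_def Tn_def .

lemma Tn_diff: "Tn n (u - v) = Tn n u - Tn n v"
proof -
  have "(P ^^ k) (u - v) = (P ^^ k) u - (P ^^ k) v" for k
    using pw_bl' by (simp add: bounded_linear.linear linear_diff)
  then show ?thesis unfolding Tn_def by (simp add: scaleR_diff_right sum_subtractf)
qed

lemma Tn_norm: "norm (Tn n z) \<le> 2 * norm z"
proof -
  have "norm (Tn n z) \<le> (\<Sum>k<n. norm (sq_coef k *\<^sub>R (P ^^ k) z))"
    unfolding Tn_def by (rule norm_sum)
  also have "\<dots> \<le> (\<Sum>k<n. \<bar>sq_coef k\<bar> * norm z)"
    by (rule sum_mono) (simp add: mult_left_mono pw_norm')
  also have "\<dots> = (\<Sum>k<n. \<bar>sq_coef k\<bar>) * norm z" by (simp add: sum_distrib_right)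
  also have "\<dots> \<le> 2 * norm z" using sq_coef_abs_psum[of n] by (simp add: mult_right_mono)
  finally show ?thesis .
qed

lemma TnTn_lim: "(\<lambda>n. Tn n (Tn n x)) \<longlonglongrightarrow> sqQ P (sqQ P x)"
proof -
  have a: "(\<lambda>n. Tn n (sqQ P x)) \<longlonglongrightarrow> sqQ P (sqQ P x)" by (rule Tn_lim)
  have b0: "(\<lambda>n. 2 * norm (Tn n x - sqQ P x)) \<longlonglongrightarrow> 2 * norm (sqQ P x - sqQ P x)"
    using Tn_lim by (intro tendsto_intros)
  have b: "(\<lambda>n. Tn n (Tn n x - sqQ P x)) \<longlonglongrightarrow> 0"
  proof (rule tendsto_norm_zero_cancel)
    have h1: "\<forall>n. 0 \<le> norm (Tn n (Tn n x - sqQ P x))" by simp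
    have h2: "\<forall>n. norm (Tn n (Tn n x - sqQ P x)) \<le> 2 * norm (Tn n x - sqQ P x)" using Tn_norm by blast
    have b1: "(\<lambda>n. 2 * norm (Tn n x - sqQ P x)) \<longlonglongrightarrow> 0" using b0 by simp
    show "(\<lambda>n. norm (Tn n (Tn n x - sqQ P x))) \<longlonglongrightarrow> 0"
      by (rule tendsto_sandwich[OF always_eventually[OF h1] always_eventually[OF h2] tendsto_const b1])
  qed
  have "(\<lambda>n. Tn n (Tn n x - sqQ P x) + Tn n (sqQ P x)) \<longlonglongrightarrow> 0 + sqQ P (sqQ P x)"
    using b a by (rule tendsto_add)
  moreover have "Tn n (Tn n x - sqQ P x) + Tn n (sqQ P x) = Tn n (Tn n x)" for n
    by (simp add: Tn_diff)
  ultimately show ?thesis by simp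
qed

definition gg :: "'a \<Rightarrow> nat \<Rightarrow> nat \<Rightarrow> 'a" where
  "gg x i j = (sq_coef i * sq_coef j) *\<^sub>R (P ^^ (i + j)) x"

lemma S1_eq: "Tn n (Tn n x) = (\<Sum>(i,j)\<in>{..<n}\<times>{..<n}. gg x i j)"
proof -
  have "Tn n (Tn n x) = (\<Sum>i<n. sq_coef i *\<^sub>R (P ^^ i) (\<Sum>j<n. sq_coef j *\<^sub>R (P ^^ j) x))"
    by (simp add: Tn_def)
  also have "\<dots> = (\<Sum>i<n. \<Sum>j<n. gg x i j)"
  proof (rule sum.cong[OF refl])
    fix i
    have "(P ^^ i) (\<Sum>j<n. sq_coef j *\<^sub>R (P ^^ j) x) = (\<Sum>j<n. sq_coef j *\<^sub>R (P ^^ i) ((P ^^ j) x))"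
      using pw_bl'[of i] by (simp add: bounded_linear.linear linear_sum linear_scale)
    then show "sq_coef i *\<^sub>R (P ^^ i) (\<Sum>j<n. sq_coef j *\<^sub>R (P ^^ j) x) = (\<Sum>j<n. gg x i j)"
      by (simp add: gg_def scaleR_sum_right funpow_add)
  qed
  also have "\<dots> = (\<Sum>(i,j)\<in>{..<n}\<times>{..<n}. gg x i j)"
    by (simp add: sum.cartesian_product)
  finally show ?thesis .
qed

lemma S2_eq: "n \<ge> 2 \<Longrightarrow> (\<Sum>(i,j)\<in>{(i,j). i+j < n}. gg x i j) = x - P x"
proof -
  assume n: "n \<ge> 2"
  have "(\<Sum>(i,j)\<in>{(i,j). i+j < n}. gg x i j) = (\<Sum>k<n. \<Sum>i\<le>k. gg x i (k - i))"
    by (rule sum.triangle_reindex)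
  also have "\<dots> = (\<Sum>k<n. (\<Sum>i\<le>k. sq_coef i * sq_coef (k - i)) *\<^sub>R (P ^^ k) x)"
  proof (rule sum.cong[OF refl])
    fix k
    have "(\<Sum>i\<le>k. gg x i (k - i)) = (\<Sum>i\<le>k. (sq_coef i * sq_coef (k - i)) *\<^sub>R (P ^^ k) x)"
      by (rule sum.cong[OF refl]) (simp add: gg_def)
    then show "(\<Sum>i\<le>k. gg x i (k - i)) = (\<Sum>i\<le>k. sq_coef i * sq_coef (k - i)) *\<^sub>R (P ^^ k) x"
      by (simp add: scaleR_sum_left)
  qed
  also have "\<dots> = (\<Sum>k<n. (if k = 0 then 1 else if k = 1 then -1 else 0) *\<^sub>R (P ^^ k) x)"
    by (simp only: sq_coef_conv)
  also have "\<dots> = (\<Sum>k\<in>{0,1}. (if k = 0 then 1 else if k = 1 then -1 else 0) *\<^sub>R (P ^^ k) x)"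
    using n by (intro sum.mono_neutral_right) auto
  also have "\<dots> = x - P x" by simp
  finally show ?thesis .
qed

lemma sqQ_sq: "sqQ P (sqQ P x) = x - P x"
proof -
  let ?A = "\<lambda>n::nat. (\<Sum>k<n. \<bar>sq_coef k\<bar>)"
  let ?L = "(\<Sum>k. \<bar>sq_coef k\<bar>)"
  let ?h = "\<lambda>(i,j). \<bar>sq_coef i\<bar> * \<bar>sq_coef j\<bar>"
  have sumabs: "summable (\<lambda>k. norm \<bar>sq_coef k\<bar>)" using sq_coef_summable by simp
  have h1: "(\<lambda>n. sum ?h ({..<n}\<times>{..<n})) \<longlonglongrightarrow> ?L * ?L"
  proof -
    have "(\<lambda>n. ?A n * ?A n) \<longlonglongrightarrow> ?L * ?L"
      using summable_LIMSEQ[OF sq_coef_summable] by (intro tendsto_mult)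
    moreover have "sum ?h ({..<n}\<times>{..<n}) = ?A n * ?A n" for n
      by (simp add: sum_product sum.cartesian_product)
    ultimately show ?thesis by simp
  qed
  have h2: "(\<lambda>n. sum ?h {(i,j). i+j < n}) \<longlonglongrightarrow> ?L * ?L"
  proof -
    have "(\<lambda>k. \<Sum>i\<le>k. \<bar>sq_coef i\<bar> * \<bar>sq_coef (k - i)\<bar>) sums (?L * ?L)"
      using Cauchy_product_sums[OF sumabs sumabs] .
    then have "(\<lambda>n. \<Sum>k<n. \<Sum>i\<le>k. \<bar>sq_coef i\<bar> * \<bar>sq_coef (k - i)\<bar>) \<longlonglongrightarrow> ?L * ?L"
      by (simp add: sums_def)
    moreover have "sum ?h {(i,j). i+j < n} = (\<Sum>k<n. \<Sum>i\<le>k. \<bar>sq_coef i\<bar> * \<bar>sq_coef (k - i)\<bar>)" for n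
      using sum.triangle_reindex[of "\<lambda>i j. \<bar>sq_coef i\<bar> * \<bar>sq_coef j\<bar>" n] by simp
    ultimately show ?thesis by simp
  qed
  have sub: "{(i,j). i+j < n} \<subseteq> {..<n}\<times>{..<n}" for n :: nat by auto
  have fin: "finite ({..<n}\<times>{..<n})" for n :: nat by simp
  have dlim: "(\<lambda>n. sum ?h ({..<n}\<times>{..<n}) - sum ?h {(i,j). i+j < n}) \<longlonglongrightarrow> 0"
    using tendsto_diff[OF h1 h2] by simp
  have diff_bound: "norm (Tn n (Tn n x) - (\<Sum>(i,j)\<in>{(i,j). i+j < n}. gg x i j))
      \<le> (sum ?h ({..<n}\<times>{..<n}) - sum ?h {(i,j). i+j < n}) * norm x" for n
  proof -
    have "Tn n (Tn n x) - (\<Sum>(i,j)\<in>{(i,j). i+j < n}. gg x i j)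
        = (\<Sum>(i,j)\<in>({..<n}\<times>{..<n}) - {(i,j). i+j < n}. gg x i j)"
      unfolding S1_eq using sum_diff[OF fin sub, of "\<lambda>(i,j). gg x i j"] by simp
    also have "norm \<dots> \<le> (\<Sum>p\<in>({..<n}\<times>{..<n}) - {(i,j). i+j < n}. norm ((\<lambda>(i,j). gg x i j) p))"
      by (rule norm_sum)
    also have "\<dots> \<le> (\<Sum>p\<in>({..<n}\<times>{..<n}) - {(i,j). i+j < n}. ?h p * norm x)"
    proof (rule sum_mono)
      fix p :: "nat \<times> nat"
      obtain i j where p: "p = (i,j)" by (cases p)
      have "norm (gg x i j) \<le> \<bar>sq_coef i\<bar> * \<bar>sq_coef j\<bar> * norm x"
        unfolding gg_def using pw_norm'[of "i+j" x] by (simp add: abs_mult mult_left_mono)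
      then show "norm ((\<lambda>(i,j). gg x i j) p) \<le> ?h p * norm x" using p by simp
    qed
    also have "\<dots> = sum ?h (({..<n}\<times>{..<n}) - {(i,j). i+j < n}) * norm x"
      by (simp add: sum_distrib_right)
    also have "sum ?h (({..<n}\<times>{..<n}) - {(i,j). i+j < n}) = sum ?h ({..<n}\<times>{..<n}) - sum ?h {(i,j). i+j < n}"
      by (rule sum_diff[OF fin sub])
    finally show ?thesis .
  qed
  have zero: "(\<lambda>n. Tn n (Tn n x) - (\<Sum>(i,j)\<in>{(i,j). i+j < n}. gg x i j)) \<longlonglongrightarrow> 0"
  proof (rule tendsto_norm_zero_cancel)
    have "(\<lambda>n. (sum ?h ({..<n}\<times>{..<n}) - sum ?h {(i,j). i+j < n}) * norm x) \<longlonglongrightarrow> 0 * norm x"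
      using dlim by (rule tendsto_mult_right)
    then have b1: "(\<lambda>n. (sum ?h ({..<n}\<times>{..<n}) - sum ?h {(i,j). i+j < n}) * norm x) \<longlonglongrightarrow> 0" by simp
    have h1: "\<forall>n. 0 \<le> norm (Tn n (Tn n x) - (\<Sum>(i,j)\<in>{(i,j). i+j < n}. gg x i j))" by simp
    have h2: "\<forall>n. norm (Tn n (Tn n x) - (\<Sum>(i,j)\<in>{(i,j). i+j < n}. gg x i j)) \<le> (sum ?h ({..<n}\<times>{..<n}) - sum ?h {(i,j). i+j < n}) * norm x"
      using diff_bound by blast
    show "(\<lambda>n. norm (Tn n (Tn n x) - (\<Sum>(i,j)\<in>{(i,j). i+j < n}. gg x i j))) \<longlonglongrightarrow> 0"
      by (rule tendsto_sandwich[OF always_eventually[OF h1] always_eventually[OF h2] tendsto_const b1])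
  qed
  have "(\<lambda>n. Tn n (Tn n x) - (\<Sum>(i,j)\<in>{(i,j). i+j < n}. gg x i j)) \<longlonglongrightarrow> sqQ P (sqQ P x) - (x - P x)"
  proof -
    have "\<forall>\<^sub>F n in sequentially. (\<Sum>(i,j)\<in>{(i,j). i+j < n}. gg x i j) = x - P x"
      using S2_eq by (auto simp: eventually_sequentially intro!: exI[of _ 2])
    then have "((\<lambda>n. (\<Sum>(i,j)\<in>{(i,j). i+j < n}. gg x i j)) \<longlongrightarrow> x - P x) sequentially"
      by (rule tendsto_eventually)
    then show ?thesis using TnTn_lim by (intro tendsto_diff)
  qed
  then have "sqQ P (sqQ P x) - (x - P x) = 0" using zero LIMSEQ_unique by blast
  then show ?thesis by simp
qed

end


lemma pos_zero:
  fixes T :: "'a::real_inner \<Rightarrow> 'a"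
  assumes lin: "linear T" and sym: "\<And>x y. inner (T x) y = inner x (T y)"
    and pos: "\<And>x. inner (T x) x \<ge> 0" and z: "inner (T y) y = 0"
  shows "T y = 0"
proof (rule ccontr)
  assume ne: "T y \<noteq> 0"
  define b where "b = inner (T y) (T y)"
  define c where "c = inner (T (T y)) (T y)"
  have b: "b > 0" using ne by (simp add: b_def)
  have c: "c \<ge> 0" using pos by (simp add: c_def)
  have expand: "inner (T (y + t *\<^sub>R T y)) (y + t *\<^sub>R T y) = 2 * t * b + t\<^sup>2 * c" for t
  proof -
    have "T (y + t *\<^sub>R T y) = T y + t *\<^sub>R T (T y)" using lin by (simp add: linear_add linear_scale)
    then have "inner (T (y + t *\<^sub>R T y)) (y + t *\<^sub>R T y)
       = inner (T y) y + t * inner (T y) (T y) + t * inner (T (T y)) y + t * t * inner (T (T y)) (T y)"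
      by (simp add: inner_add_left inner_add_right algebra_simps)
    also have "inner (T (T y)) y = inner (T y) (T y)" using sym by (simp add: inner_commute)
    finally show ?thesis using z by (simp add: b_def c_def power2_eq_square algebra_simps)
  qed
  define s where "s = b / (c + 1)"
  have sc: "s * (c + 1) = b" using c by (simp add: s_def)
  have sp: "s > 0" using b c by (simp add: s_def)
  have "0 \<le> 2 * (-s) * b + (-s)\<^sup>2 * c" using pos[of "y + (-s) *\<^sub>R T y"] expand[of "-s"] by linarith
  also have "2 * (-s) * b + (-s)\<^sup>2 * c = s * (- b - s)"
  proof -
    have "s * c = b - s" using sc by (simp add: algebra_simps)
    then have "(-s)\<^sup>2 * c = s * (b - s)" by (simp add: power2_eq_square mult.assoc)
    then show ?thesis by (simp add: algebra_simps)
  qed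
  also have "\<dots> < 0" using sp b by (simp add: mult_pos_neg)
  finally show False by simp
qed

context
  fixes D :: "'a::{real_inner,complete_space} set" and A :: "'a \<Rightarrow> 'a" and \<omega> :: real
  assumes good: "good_op D A \<omega>"
begin

abbreviation "BB \<equiv> inv_into D A"

definition PP :: "'a \<Rightarrow> 'a" where "PP x = x - \<omega> *\<^sub>R BB x"

definition RR :: "'a \<Rightarrow> 'a" where "RR x = (1 / sqrt \<omega>) *\<^sub>R sqQ PP x"

lemma om: "\<omega> > 0" using g_om[OF good] .

lemma PP_bl: "bounded_linear PP"
  unfolding PP_def
  by (intro bounded_linear_sub bounded_linear_ident bounded_linear_compose[OF bounded_linear_scaleR_right B_bl[OF good]])

lemma PP_sym: "inner (PP x) y = inner x (PP y)"
  unfolding PP_def by (simp add: inner_diff_left inner_diff_right B_sym[OF good])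

lemma PP_norm: "norm (PP x) \<le> norm x"
proof -
  have pos: "inner (BB x) x \<ge> \<omega> * (norm (BB x))\<^sup>2" by (rule B_pos[OF good])
  have "(norm (PP x))\<^sup>2 = (norm x)\<^sup>2 - 2 * \<omega> * inner (BB x) x + \<omega>\<^sup>2 * (norm (BB x))\<^sup>2"
    unfolding PP_def power2_norm_eq_inner
    by (simp add: inner_diff_left inner_diff_right inner_commute[of x "BB x"] power2_eq_square algebra_simps)
  also have "\<dots> \<le> (norm x)\<^sup>2"
  proof -
    have "\<omega>\<^sup>2 * (norm (BB x))\<^sup>2 = \<omega> * (\<omega> * (norm (BB x))\<^sup>2)" by (simp add: power2_eq_square)
    also have "\<dots> \<le> \<omega> * inner (BB x) x" using pos om by (simp add: mult_left_mono)
    finally have "\<omega>\<^sup>2 * (norm (BB x))\<^sup>2 \<le> \<omega> * inner (BB x) x" .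
    moreover have "\<omega> * inner (BB x) x \<ge> 0"
      using pos om by (meson mult_nonneg_nonneg order_trans zero_le_power2 less_imp_le)
    ultimately show ?thesis by linarith
  qed
  finally show ?thesis by (simp add: power2_le_iff_abs_le)
qed

lemmas PPa = PP_bl PP_sym PP_norm

lemma RR_bl: "bounded_linear RR"
  unfolding RR_def by (rule bounded_linear_compose[OF bounded_linear_scaleR_right sqQ_bl[OF PPa]])

lemma RR_lin: "linear RR" using RR_bl bounded_linear.linear by blast

lemma RR_sym: "inner (RR x) y = inner x (RR y)"
  unfolding RR_def using sqQ_sym[OF PPa] by simp

lemma RR_pos: "inner (RR x) x \<ge> 0"
  unfolding RR_def using sqQ_pos[OF PPa, of x] om by simp

lemma RR_sq: "RR (RR x) = BB x"
proof -
  have "RR (RR x) = (1 / sqrt \<omega>) *\<^sub>R ((1 / sqrt \<omega>) *\<^sub>R sqQ PP (sqQ PP x))"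
    unfolding RR_def using bounded_linear.linear[OF sqQ_bl[OF PPa]] by (simp add: linear_scale)
  also have "sqQ PP (sqQ PP x) = x - PP x" by (rule sqQ_sq[OF PPa])
  also have "x - PP x = \<omega> *\<^sub>R BB x" by (simp add: PP_def)
  moreover have "sqrt \<omega> * sqrt \<omega> = \<omega>" using om by simp
  ultimately show ?thesis using om by simp
qed

lemma RR_comm:
  assumes Cbl: "bounded_linear C" and CB: "\<And>x. C (BB x) = BB (C x)"
  shows "C (RR x) = RR (C x)"
proof -
  have "C (PP y) = PP (C y)" for y
    using Cbl CB by (simp add: PP_def bounded_linear.linear linear_diff linear_scale)
  then have "C (sqQ PP x) = sqQ PP (C x)" using sqQ_comm[OF PPa Cbl] by blast
  then show ?thesis unfolding RR_def using Cbl by (simp add: bounded_linear.linear linear_scale)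
qed

lemma RR_unique:
  assumes Cbl: "bounded_linear C" and Csym: "\<And>x y. inner (C x) y = inner x (C y)"
    and Cpos: "\<And>x. inner (C x) x \<ge> 0" and Csq: "\<And>x. C (C x) = BB x"
  shows "C x = RR x"
proof -
  have CB: "C (BB y) = BB (C y)" for y using Csq by metis
  have RC: "RR (C y) = C (RR y)" for y using RR_comm[OF Cbl CB] by simp
  have Clin: "linear C" using Cbl bounded_linear.linear by blast
  define y where "y = RR x - C x"
  have "RR y + C y = 0"
    unfolding y_def using RR_lin Clin RC[of x] by (simp add: linear_diff RR_sq Csq)
  then have "inner (RR y) y + inner (C y) y = 0" by (simp add: inner_add_left[symmetric])
  then have "inner (RR y) y = 0" "inner (C y) y = 0" using RR_pos[of y] Cpos[of y] by linarith+
  then have ry: "RR y = 0" and cy: "C y = 0"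
    using pos_zero[OF RR_lin RR_sym RR_pos] pos_zero[OF Clin Csym Cpos] by blast+
  have "inner y y = inner (RR x) y - inner (C x) y" by (simp add: y_def inner_diff_left)
  also have "\<dots> = 0" using ry cy by (simp add: RR_sym Csym)
  finally have "y = 0" by simp
  then show ?thesis by (simp add: y_def)
qed

end


context
  fixes D :: "'a::{real_inner,complete_space} set" and A :: "'a \<Rightarrow> 'a" and \<omega> :: real
  assumes good: "good_op D A \<omega>"
begin

definition SD :: "'a set" where "SD = range (RR D A \<omega>)"
definition SS :: "'a \<Rightarrow> 'a" where
  "SS u = (if u \<in> range (RR D A \<omega>) then inv_into UNIV (RR D A \<omega>) u else 0)"

lemma R_lin: "linear (RR D A \<omega>)" using RR_lin[OF good] .
lemma R_sym: "inner (RR D A \<omega> x) y = inner x (RR D A \<omega> y)" using RR_sym[OF good] .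
lemma R_pos: "inner (RR D A \<omega> x) x \<ge> 0" using RR_pos[OF good] .
lemma R_sq: "RR D A \<omega> (RR D A \<omega> x) = inv_into D A x" using RR_sq[OF good] .

lemma R_inj: "inj (RR D A \<omega>)"
proof (rule injI)
  fix x y assume e: "RR D A \<omega> x = RR D A \<omega> y"
  have "RR D A \<omega> (x - y) = 0" using e R_lin by (simp add: linear_diff)
  then have "RR D A \<omega> (RR D A \<omega> (x - y)) = 0" using R_lin by (simp add: linear_0)
  then have "inv_into D A (x - y) = 0" using R_sq by simp
  then have "A (inv_into D A (x - y)) = A 0" by simp
  then have "x - y = 0" using AB[OF good] lin_op_0[OF g_lin[OF good]] by simp
  then show "x = y" by simp
qed

lemma SS_R: "SS (RR D A \<omega> x) = x"
  unfolding SS_def using R_inj by (simp add: inv_into_f_f)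

lemma SD_sub: "subspace SD"
  unfolding subspace_def SD_def
proof (intro conjI ballI allI)
  show "0 \<in> range (RR D A \<omega>)" using R_lin by (metis linear_0 rangeI)
next
  fix x y assume "x \<in> range (RR D A \<omega>)" "y \<in> range (RR D A \<omega>)"
  then obtain a b where "x = RR D A \<omega> a" "y = RR D A \<omega> b" by auto
  then have "x + y = RR D A \<omega> (a + b)" using R_lin by (simp add: linear_add)
  then show "x + y \<in> range (RR D A \<omega>)" by simp
next
  fix c :: real and x assume "x \<in> range (RR D A \<omega>)"
  then obtain a where "x = RR D A \<omega> a" by auto
  then have "c *\<^sub>R x = RR D A \<omega> (c *\<^sub>R a)" using R_lin by (simp add: linear_scale)
  then show "c *\<^sub>R x \<in> range (RR D A \<omega>)" by simp
qed

lemma orth_zero: "(\<And>y. inner z y = 0) \<Longrightarrow> z = (0::'a)"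
  by (metis inner_eq_zero_iff)

lemma SD_dense: "closure SD = UNIV"
proof (rule dense_of_orth[OF SD_sub])
  fix x assume h: "\<forall>m\<in>SD. inner x m = 0"
  have "inner (RR D A \<omega> x) y = 0" for y
    using h R_sym unfolding SD_def by auto
  then have "RR D A \<omega> x = 0" by (rule orth_zero)
  then have "RR D A \<omega> x = RR D A \<omega> 0" using R_lin by (simp add: linear_0)
  then show "x = 0" using R_inj by (simp add: inj_eq)
qed

lemma is_sqrt_SS: "is_sqrt_op D A SD SS"
  unfolding is_sqrt_op_def
proof (intro conjI)
  show "lin_op SD SS"
    unfolding lin_op_def
  proof (intro conjI ballI allI)
    show "subspace SD" by (rule SD_sub)
  next
    fix x y assume "x \<in> SD" "y \<in> SD"
    then obtain a b where ab: "x = RR D A \<omega> a" "y = RR D A \<omega> b" by (auto simp: SD_def)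
    then have "x + y = RR D A \<omega> (a + b)" using R_lin by (simp add: linear_add)
    then show "SS (x + y) = SS x + SS y" using ab by (simp add: SS_R)
  next
    fix c :: real and x assume "x \<in> SD"
    then obtain a where a: "x = RR D A \<omega> a" by (auto simp: SD_def)
    then have "c *\<^sub>R x = RR D A \<omega> (c *\<^sub>R a)" using R_lin by (simp add: linear_scale)
    then show "SS (c *\<^sub>R x) = c *\<^sub>R SS x" using a by (simp add: SS_R)
  qed
next
  show "densely_defined SD" unfolding densely_defined_def by (rule SD_dense)
next
  have "{(x, SS x) | x. x \<in> SD} = {p. fst p = RR D A \<omega> (snd p)}"
    by (auto simp: SD_def SS_R)
  moreover have "closed {p. fst p = RR D A \<omega> (snd p)}"
  proof (rule closed_Collect_eq)
    show "continuous_on UNIV (\<lambda>p. fst p)" by (intro continuous_intros)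
    have "continuous_on UNIV (RR D A \<omega>)"
      using RR_bl[OF good] by (simp add: linear_continuous_on)
    then show "continuous_on UNIV (\<lambda>p. RR D A \<omega> (snd p))"
      by (intro continuous_on_compose2[where f=snd and g="RR D A \<omega>"] continuous_intros) auto
  qed
  ultimately show "closed_op SD SS" unfolding closed_op_def by simp
next
  show "self_adjoint SD SS"
    unfolding self_adjoint_def
  proof (intro conjI ballI)
    show "adj_dom SD SS = SD"
    proof
      show "adj_dom SD SS \<subseteq> SD"
      proof
        fix v assume "v \<in> adj_dom SD SS"
        then obtain w where w: "\<forall>u\<in>SD. inner (SS u) v = inner u w" by (auto simp: adj_dom_def)
        have "inner (v - RR D A \<omega> w) y = 0" for y
        proof -
          have "inner y v = inner (RR D A \<omega> y) w" using w[rule_format, of "RR D A \<omega> y"]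
            by (simp add: SD_def SS_R)
          also have "\<dots> = inner y (RR D A \<omega> w)" by (rule R_sym)
          finally have e: "inner y v = inner y (RR D A \<omega> w)" .
          have "inner (v - RR D A \<omega> w) y = inner v y - inner (RR D A \<omega> w) y" by (rule inner_diff_left)
          also have "\<dots> = inner y v - inner y (RR D A \<omega> w)" by (simp only: inner_commute)
          finally show ?thesis using e by simp
        qed
        then have "v - RR D A \<omega> w = 0" by (rule orth_zero)
        then show "v \<in> SD" by (simp add: SD_def)
      qed
    next
      show "SD \<subseteq> adj_dom SD SS"
      proof
        fix v assume "v \<in> SD"
        then obtain z where z: "v = RR D A \<omega> z" by (auto simp: SD_def)
        have "\<forall>u\<in>SD. inner (SS u) v = inner u z"
        proof
          fix u assume "u \<in> SD"
          then obtain y where y: "u = RR D A \<omega> y" by (auto simp: SD_def)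
          show "inner (SS u) v = inner u z" using y z by (simp add: SS_R R_sym)
        qed
        then show "v \<in> adj_dom SD SS" by (auto simp: adj_dom_def)
      qed
    qed
  next
    fix u v assume "u \<in> SD" "v \<in> SD"
    then obtain a b where ab: "u = RR D A \<omega> a" "v = RR D A \<omega> b" by (auto simp: SD_def)
    show "inner (SS u) v = inner u (SS v)" using ab by (simp add: SS_R R_sym)
  qed
next
  show "\<forall>u\<in>SD. inner (SS u) u \<ge> 0"
  proof
    fix u assume "u \<in> SD"
    then obtain a where a: "u = RR D A \<omega> a" by (auto simp: SD_def)
    show "inner (SS u) u \<ge> 0" using a R_pos[of a] by (simp add: SS_R inner_commute)
  qed
next
  show "\<forall>u. u \<notin> SD \<longrightarrow> SS u = 0" by (simp add: SS_def SD_def)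
next
  show "{u \<in> SD. SS u \<in> SD} = D"
  proof
    show "{u \<in> SD. SS u \<in> SD} \<subseteq> D"
    proof
      fix u assume "u \<in> {u \<in> SD. SS u \<in> SD}"
      then obtain a b where "u = RR D A \<omega> a" "a = RR D A \<omega> b"
        by (auto simp: SD_def SS_R)
      then have "u = inv_into D A b" using R_sq by simp
      then show "u \<in> D" using B_mem[OF good] by simp
    qed
  next
    show "D \<subseteq> {u \<in> SD. SS u \<in> SD}"
    proof
      fix u assume u: "u \<in> D"
      have "u = RR D A \<omega> (RR D A \<omega> (A u))" using R_sq BA[OF good u] by simp
      then show "u \<in> {u \<in> SD. SS u \<in> SD}" by (metis (mono_tags, lifting) SD_def SS_R mem_Collect_eq rangeI)
    qed
  qed
next
  show "\<forall>u\<in>D. SS (SS u) = A u"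
  proof
    fix u assume u: "u \<in> D"
    have "u = RR D A \<omega> (RR D A \<omega> (A u))" using R_sq BA[OF good u] by simp
    then show "SS (SS u) = A u" by (metis SS_R)
  qed
qed

end


context
  fixes D :: "'a::{real_inner,complete_space} set" and A :: "'a \<Rightarrow> 'a" and \<omega> :: real
  assumes good: "good_op D A \<omega>"
begin

lemma sqrt_unique:
  assumes sq: "is_sqrt_op D A DT T"
  shows "DT = SD D A \<omega> \<and> T = SS D A \<omega>"
proof -
  have lin: "lin_op DT T" and sa: "self_adjoint DT T" and pos: "\<forall>u\<in>DT. inner (T u) u \<ge> 0"
    and out: "\<forall>u. u \<notin> DT \<longrightarrow> T u = 0" and dom: "{u \<in> DT. T u \<in> DT} = D"
    and sqA: "\<forall>u\<in>D. T (T u) = A u"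
    using sq unfolding is_sqrt_op_def by auto
  have sub: "subspace DT" using lin by (rule lin_op_sub)
  have Tsym: "\<And>u v. u \<in> DT \<Longrightarrow> v \<in> DT \<Longrightarrow> inner (T u) v = inner u (T v)"
    using sa by (simp add: self_adjoint_def)
  have DsubDT: "\<And>u. u \<in> D \<Longrightarrow> u \<in> DT" and TD: "\<And>u. u \<in> D \<Longrightarrow> T u \<in> DT"
    using dom by blast+
  have Ainj0: "\<And>u. u \<in> D \<Longrightarrow> A u = 0 \<Longrightarrow> u = 0"
  proof -
    fix u assume u: "u \<in> D" "A u = 0"
    have "u = inv_into D A (A u)" using BA[OF good u(1)] by simp
    also have "\<dots> = inv_into D A (A 0)" using u lin_op_0[OF g_lin[OF good]] by simp
    also have "\<dots> = 0" using BA[OF good subspace_0[OF g_sub[OF good]]] by simp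
    finally show "u = 0" .
  qed
  have T0: "T 0 = 0" using lin_op_0[OF lin] .
  have Tinj: "inj_on T DT"
  proof (rule inj_onI)
    fix x y assume xy: "x \<in> DT" "y \<in> DT" "T x = T y"
    have d: "x - y \<in> DT" using sub xy subspace_diff by blast
    have "T (x - y) = 0" using lin_op_diff[OF lin xy(1,2)] xy(3) by simp
    then have "x - y \<in> D" using dom d subspace_0[OF sub] by auto
    moreover have "A (x - y) = 0" using sqA \<open>x - y \<in> D\<close> \<open>T (x - y) = 0\<close> T0 by metis
    ultimately have "x - y = 0" using Ainj0 by blast
    then show "x = y" by simp
  qed
  define C where "C = inv_into DT T"
  have Tsurj: "\<And>y. T (T (inv_into D A y)) = y" and TBmem: "\<And>y. T (inv_into D A y) \<in> DT"
    using sqA B_mem[OF good] AB[OF good] TD by auto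
  have Cmem: "C y \<in> DT" and TC: "T (C y) = y" for y
  proof -
    have "y \<in> T ` DT" using Tsurj[of y] TBmem[of y] by (metis image_eqI)
    then show "C y \<in> DT" "T (C y) = y" unfolding C_def by (auto intro: inv_into_into f_inv_into_f)
  qed
  have CT: "\<And>u. u \<in> DT \<Longrightarrow> C (T u) = u" unfolding C_def using Tinj by (rule inv_into_f_f)
  have C_eq: "\<And>u y. u \<in> DT \<Longrightarrow> T u = y \<Longrightarrow> C y = u" using CT by blast
  have Cadd: "C (x + y) = C x + C y" for x y
  proof (rule C_eq)
    show "C x + C y \<in> DT" using Cmem sub subspace_add by blast
    show "T (C x + C y) = x + y" using lin_op_add[OF lin Cmem Cmem] TC by simp
  qed
  have Cscale: "C (c *\<^sub>R x) = c *\<^sub>R C x" for c x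
  proof (rule C_eq)
    show "c *\<^sub>R C x \<in> DT" using Cmem sub subspace_scale by blast
    show "T (c *\<^sub>R C x) = c *\<^sub>R x" using lin_op_scale[OF lin Cmem] TC by simp
  qed
  have CC: "C (C y) = inv_into D A y" for y
  proof -
    have "C y = T (inv_into D A y)" using C_eq[OF TBmem Tsurj] by simp
    then show ?thesis using C_eq[OF DsubDT[OF B_mem[OF good]]] by simp
  qed
  have Csym: "inner (C x) y = inner x (C y)" for x y
  proof -
    have "inner (C x) y = inner (C x) (T (C y))" using TC by simp
    also have "\<dots> = inner (T (C x)) (C y)" using Tsym[OF Cmem Cmem] by simp
    finally show ?thesis using TC by simp
  qed
  have Cpos: "inner (C x) x \<ge> 0" for x
  proof -
    have "inner (C x) x = inner (C x) (T (C x))" using TC by simp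
    also have "\<dots> = inner (T (C x)) (C x)" by (simp add: inner_commute)
    finally show ?thesis using pos Cmem by simp
  qed
  have Cnorm: "norm (C x) \<le> norm x * (1 / sqrt \<omega>)" for x
  proof -
    have om: "\<omega> > 0" using g_om[OF good] .
    have "(norm (C x))\<^sup>2 = inner (C x) (C x)" by (simp add: power2_norm_eq_inner)
    also have "\<dots> = inner (C (C x)) x" using Csym by simp
    also have "\<dots> = inner (inv_into D A x) x" using CC by simp
    also have "\<dots> \<le> norm (inv_into D A x) * norm x" by (rule norm_cauchy_schwarz)
    also have "\<dots> \<le> (norm x / \<omega>) * norm x"
      using B_norm[OF good, of x] om by (intro mult_right_mono) (simp_all add: field_simps)
    also have "\<dots> = (norm x * (1 / sqrt \<omega>))\<^sup>2" using om by (simp add: power2_eq_square field_simps)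
    finally show ?thesis using om by (simp add: power2_le_iff_abs_le)
  qed
  have Cbl: "bounded_linear C"
  proof (rule bounded_linear_intro[where K="1 / sqrt \<omega>"])
    show "C (x + y) = C x + C y" for x y by (rule Cadd)
    show "C (r *\<^sub>R x) = r *\<^sub>R C x" for r x by (rule Cscale)
    show "norm (C x) \<le> norm x * (1 / sqrt \<omega>)" for x by (rule Cnorm)
  qed
  have CR: "\<And>x. C x = RR D A \<omega> x" using RR_unique[OF good Cbl Csym Cpos CC] by blast
  have DT_eq: "DT = SD D A \<omega>"
  proof
    show "DT \<subseteq> SD D A \<omega>"
    proof
      fix u assume "u \<in> DT"
      then have "u = C (T u)" using CT by simp
      then have "u = RR D A \<omega> (T u)" using CR by simp
      then show "u \<in> SD D A \<omega>" unfolding SD_def[OF good] by (metis rangeI)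
    qed
    show "SD D A \<omega> \<subseteq> DT" unfolding SD_def[OF good] using Cmem CR by auto
  qed
  have "T u = SS D A \<omega> u" for u
  proof (cases "u \<in> DT")
    case True
    then obtain y where y: "u = RR D A \<omega> y" using DT_eq unfolding SD_def[OF good] by auto
    then have "T u = y" using TC CR by metis
    then show ?thesis using y SS_R[OF good] by simp
  next
    case False
    then show ?thesis using out DT_eq by (simp add: SS_def[OF good] SD_def[OF good])
  qed
  then show ?thesis using DT_eq by auto
qed

lemma sqrt_pair_eq: "sqrt_dom D A = SD D A \<omega>" "sqrt_op D A = SS D A \<omega>"
proof -
  have "sqrt_pair D A = (SD D A \<omega>, SS D A \<omega>)"
    unfolding sqrt_pair_def
  proof (rule the_equality)
    show "is_sqrt_op D A (fst (SD D A \<omega>, SS D A \<omega>)) (snd (SD D A \<omega>, SS D A \<omega>))"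
      using is_sqrt_SS[OF good] by simp
  next
    fix p assume "is_sqrt_op D A (fst p) (snd p)"
    then show "p = (SD D A \<omega>, SS D A \<omega>)" using sqrt_unique by (metis prod.collapse)
  qed
  then show "sqrt_dom D A = SD D A \<omega>" "sqrt_op D A = SS D A \<omega>"
    by (simp_all add: sqrt_dom_def sqrt_op_def)
qed

end


lemma norm_bound_dense:
  fixes w :: "'a::real_inner"
  assumes dense: "closure M = UNIV" and b: "\<forall>z\<in>M. \<bar>inner z w\<bar> \<le> K * norm z" and K: "K \<ge> 0"
  shows "norm w \<le> K"
proof -
  have "w \<in> closure M" using dense by simp
  then obtain z where z: "\<And>n. z n \<in> M" "z \<longlonglongrightarrow> w" unfolding closure_sequential by blast
  have l1: "(\<lambda>n. \<bar>inner (z n) w\<bar>) \<longlonglongrightarrow> \<bar>inner w w\<bar>" using z(2) by (intro tendsto_intros)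
  have l2: "(\<lambda>n. K * norm (z n)) \<longlonglongrightarrow> K * norm w" using z(2) by (intro tendsto_intros)
  have "\<bar>inner w w\<bar> \<le> K * norm w" using l1 l2 b z(1) by (intro LIMSEQ_le) auto
  then have "norm w * norm w \<le> K * norm w" by (simp add: power2_norm_eq_inner[symmetric] power2_eq_square)
  then show ?thesis
    by (cases "norm w = 0") (use K in auto)
qed

theorem lemma3p1:
  fixes D1 D2 :: "'a::{real_inner, complete_space} set"
    and A1 A2 :: "'a \<Rightarrow> 'a"
    and \<omega>1 \<omega>2 :: real
  assumes "lin_op D1 A1" "densely_defined D1" "closed_op D1 A1" "self_adjoint D1 A1"
    and "lin_op D2 A2" "densely_defined D2" "closed_op D2 A2" "self_adjoint D2 A2"
    and "\<omega>1 > 0" "\<forall>u\<in>D1. inner (A1 u) u \<ge> \<omega>1 * (norm u)\<^sup>2"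
    and "\<omega>2 > 0" "\<forall>u\<in>D2. inner (A2 u) u \<ge> \<omega>2 * (norm u)\<^sup>2"
  shows "((D2 \<subseteq> sqrt_dom D1 A1 \<and>
            (\<exists>c>0. \<forall>u\<in>D2. norm (sqrt_op D1 A1 u) \<le> c * norm (A2 u)))
          \<longleftrightarrow> ((\<forall>x. inv_into D2 A2 x \<in> sqrt_dom D1 A1) \<and>
               bounded_linear (\<lambda>x. sqrt_op D1 A1 (inv_into D2 A2 x))))
       \<and> ((D2 \<subseteq> sqrt_dom D1 A1 \<and>
            (\<exists>c>0. \<forall>u\<in>D2. norm (sqrt_op D1 A1 u) \<le> c * norm (A2 u)))
          \<longleftrightarrow> (\<exists>c>0. \<forall>u\<in>D1. \<forall>v\<in>D2.
                 \<bar>inner (A1 u) v\<bar> \<le> c * norm (A2 v) * sqrt (inner (A1 u) u)))"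
proof -
  have good1: "good_op D1 A1 \<omega>1" using assms by (simp add: good_op_def)
  have good2: "good_op D2 A2 \<omega>2" using assms by (simp add: good_op_def)
  define R where "R = RR D1 A1 \<omega>1"
  define S where "S = SS D1 A1 \<omega>1"
  have dom: "sqrt_dom D1 A1 = range R" using sqrt_pair_eq(1)[OF good1] SD_def[OF good1] R_def by simp
  have op: "sqrt_op D1 A1 = S" using sqrt_pair_eq(2)[OF good1] S_def by simp
  have SR: "\<And>x. S (R x) = x" unfolding S_def R_def using SS_R[OF good1] .
  have Rlin: "linear R" unfolding R_def using R_lin[OF good1] .
  have Rsym: "\<And>x y. inner (R x) y = inner x (R y)" unfolding R_def using R_sym[OF good1] .
  have Rsq: "\<And>x. R (R x) = inv_into D1 A1 x" unfolding R_def using R_sq[OF good1] .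
  have Rdense: "closure (range R) = UNIV" using SD_dense[OF good1] SD_def[OF good1] R_def by simp
  have Rsub: "subspace (range R)" using SD_sub[OF good1] SD_def[OF good1] R_def by simp
  have Slin: "lin_op (range R) S"
    using is_sqrt_SS[OF good1] SD_def[OF good1] R_def S_def by (simp add: is_sqrt_op_def)
  have B2mem: "\<And>x. inv_into D2 A2 x \<in> D2" using B_mem[OF good2] .
  have AB2: "\<And>x. A2 (inv_into D2 A2 x) = x" using AB[OF good2] .
  have BA2: "\<And>u. u \<in> D2 \<Longrightarrow> inv_into D2 A2 (A2 u) = u" using BA[OF good2] .
  have B1mem: "\<And>x. inv_into D1 A1 x \<in> D1" using B_mem[OF good1] .
  have AB1: "\<And>x. A1 (inv_into D1 A1 x) = x" using AB[OF good1] .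
  have BA1: "\<And>u. u \<in> D1 \<Longrightarrow> inv_into D1 A1 (A1 u) = u" using BA[OF good1] .
  have B2add: "\<And>x y. inv_into D2 A2 (x + y) = inv_into D2 A2 x + inv_into D2 A2 y" using B_add[OF good2] .
  have B2scale: "\<And>c x. inv_into D2 A2 (c *\<^sub>R x) = c *\<^sub>R inv_into D2 A2 x" using B_scale[OF good2] .
  let ?a = "D2 \<subseteq> range R \<and> (\<exists>c>0. \<forall>u\<in>D2. norm (S u) \<le> c * norm (A2 u))"
  let ?b = "(\<forall>x. inv_into D2 A2 x \<in> range R) \<and> bounded_linear (\<lambda>x. S (inv_into D2 A2 x))"
  let ?c = "\<exists>c>0. \<forall>u\<in>D1. \<forall>v\<in>D2. \<bar>inner (A1 u) v\<bar> \<le> c * norm (A2 v) * sqrt (inner (A1 u) u)"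
  have ab: "?a \<Longrightarrow> ?b"
  proof -
    assume a: ?a
    then obtain c where c: "c > 0" "\<forall>u\<in>D2. norm (S u) \<le> c * norm (A2 u)" by blast
    have mem: "\<And>x. inv_into D2 A2 x \<in> range R" using a B2mem by blast
    have "bounded_linear (\<lambda>x. S (inv_into D2 A2 x))"
    proof (rule bounded_linear_intro[where K=c])
      show "S (inv_into D2 A2 (x + y)) = S (inv_into D2 A2 x) + S (inv_into D2 A2 y)" for x y
        using B2add lin_op_add[OF Slin mem mem] by simp
      show "S (inv_into D2 A2 (r *\<^sub>R x)) = r *\<^sub>R S (inv_into D2 A2 x)" for r x
        using B2scale lin_op_scale[OF Slin mem] by simp
      show "norm (S (inv_into D2 A2 x)) \<le> norm x * c" for x
      proof -
        have "norm (S (inv_into D2 A2 x)) \<le> c * norm (A2 (inv_into D2 A2 x))" using c(2) B2mem by blast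
        then show ?thesis using AB2[of x] by (simp add: mult.commute)
      qed
    qed
    then show ?b using mem by blast
  qed
  have ba: "?b \<Longrightarrow> ?a"
  proof -
    assume b: ?b
    then obtain K where K: "K > 0" "\<And>x. norm (S (inv_into D2 A2 x)) \<le> norm x * K"
      using bounded_linear.pos_bounded by blast
    have sub: "D2 \<subseteq> range R"
    proof
      fix u assume u: "u \<in> D2"
      have "inv_into D2 A2 (A2 u) \<in> range R" using b by blast
      then show "u \<in> range R" using BA2[OF u] by simp
    qed
    have "\<forall>u\<in>D2. norm (S u) \<le> K * norm (A2 u)"
    proof
      fix u assume u: "u \<in> D2"
      have "norm (S (inv_into D2 A2 (A2 u))) \<le> norm (A2 u) * K" by (rule K(2))
      then show "norm (S u) \<le> K * norm (A2 u)" using BA2[OF u] by (simp add: mult.commute)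
    qed
    then show ?a using sub K(1) by blast
  qed
  have ac: "?a \<Longrightarrow> ?c"
  proof -
    assume a: ?a
    then obtain c where c: "c > 0" "\<forall>u\<in>D2. norm (S u) \<le> c * norm (A2 u)" by blast
    have "\<bar>inner (A1 u) v\<bar> \<le> c * norm (A2 v) * sqrt (inner (A1 u) u)" if u: "u \<in> D1" and v: "v \<in> D2" for u v
    proof -
      obtain w where w: "v = R w" using a v by blast
      have Sv: "S v = w" using w SR by simp
      define y where "y = A1 u"
      have uy: "u = R (R y)" using Rsq BA1[OF u] y_def by simp
      have i1: "inner (A1 u) v = inner (R y) w" using w y_def Rsym by simp
      have i2: "inner (A1 u) u = (norm (R y))\<^sup>2"
        using uy y_def Rsym by (simp add: power2_norm_eq_inner)
      have "\<bar>inner (R y) w\<bar> \<le> norm (R y) * norm w" by (rule Cauchy_Schwarz_ineq2)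
      also have "\<dots> \<le> norm (R y) * (c * norm (A2 v))"
        using c(2) v Sv by (intro mult_left_mono) auto
      finally show ?thesis using i1 i2 by (simp add: mult.commute mult.left_commute)
    qed
    then show ?c using c(1) by blast
  qed
  have ca: "?c \<Longrightarrow> ?a"
  proof -
    assume ?c
    then obtain c where c: "c > 0" "\<forall>u\<in>D1. \<forall>v\<in>D2. \<bar>inner (A1 u) v\<bar> \<le> c * norm (A2 v) * sqrt (inner (A1 u) u)"
      by blast
    have main: "v \<in> range R \<and> norm (S v) \<le> c * norm (A2 v)" if v: "v \<in> D2" for v
    proof -
      define K where "K = c * norm (A2 v)"
      have K0: "K \<ge> 0" using c(1) by (simp add: K_def)
      have bnd: "\<bar>inner y v\<bar> \<le> K * norm (R y)" for y
      proof -
        define u where "u = inv_into D1 A1 y"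
        have u: "u \<in> D1" "A1 u = y" using B1mem AB1 u_def by auto
        have "inner (A1 u) u = (norm (R y))\<^sup>2"
          using u Rsq Rsym u_def by (simp add: power2_norm_eq_inner)
        then have sq: "sqrt (inner (A1 u) u) = norm (R y)" by simp
        have "\<bar>inner (A1 u) v\<bar> \<le> c * norm (A2 v) * sqrt (inner (A1 u) u)" using c(2) u(1) v by blast
        then show ?thesis using sq u(2) by (simp add: K_def)
      qed
      define \<phi> where "\<phi> z = inner (S z) v" for z
      obtain w where w: "\<forall>z\<in>range R. \<phi> z = inner z w"
      proof -
        have "\<exists>w. \<forall>z\<in>range R. \<phi> z = inner z w"
        proof (rule riesz_dense[OF Rsub])
          show "\<phi> (x + y) = \<phi> x + \<phi> y" if "x \<in> range R" "y \<in> range R" for x y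
            using lin_op_add[OF Slin that] by (simp add: \<phi>_def inner_add_left)
          show "\<phi> (r *\<^sub>R x) = r * \<phi> x" if "x \<in> range R" for r x
            using lin_op_scale[OF Slin that] by (simp add: \<phi>_def)
          show "\<bar>\<phi> x\<bar> \<le> K * norm x" if "x \<in> range R" for x
            using that bnd SR by (auto simp: \<phi>_def)
        qed
        then show ?thesis using that by blast
      qed
      have eq: "inner y v = inner y (R w)" for y
        using w[rule_format, of "R y"] SR Rsym by (simp add: \<phi>_def)
      have "v = R w"
      proof -
        have "inner (v - R w) (v - R w) = 0"
          using eq[of "v - R w"] by (simp add: inner_diff_right inner_commute)
        then show ?thesis by simp
      qed
      moreover have "norm w \<le> K"
      proof (rule norm_bound_dense[OF Rdense _ K0], intro ballI)
        fix z assume "z \<in> range R"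
        then obtain y where y: "z = R y" by auto
        have "inner z w = inner y v" using eq[of y] y Rsym by simp
        then show "\<bar>inner z w\<bar> \<le> K * norm z" using bnd y by simp
      qed
      ultimately show ?thesis using SR K_def by auto
    qed
    then show ?a using c(1) by blast
  qed
  show ?thesis unfolding dom op using ab ba ac ca by blast
qed


end
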